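(* Let $A$ be a Jordan algebra with unit over a field of characteristic $0$. The map $\Phi$, which sends a representation $\rho$ of $L(A)$ on $V$ to the generalized representation $(\rho|_{U_{-1}},-\rho(\bar A))$ of $A$ on $V$, induces a one-to-one correspondence between (equivalence classes of) finite-dimensional irreducible representations of the Lie algebra $L(A)$ and (equivalence classes of) finite-dimensional irreducible generalized representations of $A$.
   Context: Jordan algebra: commutative algebra with product $*$ satisfying $(x^2*y)*x=x^2*(y*x)$. $L(A)=U_{-1}\oplus U_0\oplus U_1$ is the Lie algebra built as follows: $\mathcal U$ = underlying space of $A$, $L_a(x)=a*x$, bilinear maps $\bar A(x,y)=x*y$, $A_a(x,y)=(x*a)*y+(y*a)*x-a*(x*y)$; $U_{-1}=\mathcal U$, $U_0=\mathrm{span}\{L_a,[L_a,L_b]\}\subset\mathrm{End}\,\mathcal U$, $U_1=\mathrm{span}\{\bar A,A_a\}$; skew-symmetric bracket $[a,b]=0$ on $U_{-1}$, $[B_1,B_2]=0$ on $U_1$, $[S,a]=S(a)$, $[S_1,S_2]=S_1S_2-S_2S_1$, $[B,a]=(y\mapsto B(a,y))$, $[S,B]=((x,y)\mapsto S(B(x,y))-B(Sx,y)-B(x,Sy))$ (so $[[\bar A,x],y]=x*y$). For $a\in\mathrm{End}\,V$, $x*_ay=[[x,a],y]=xay+yax-axy-yxa$. A generalized representation of $A$ (unit $e$) in $V$ is a pair $(\pi,a)$, $a\in\mathrm{End}\,V$, $\pi:A\to\mathrm{End}\,V$ linear, with $\pi(x*y)=\pi(x)*_a\pi(y)$ and $[a,[\pi(e),a]]=a$.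 It is irreducible if $V\neq0$ and there is no subspace $0\ne W\ne V$ invariant under $a$ and all $\pi(x)$. Two generalized representations $(\pi,a)$ on $V$ and $(\nu,b)$ on $W$ are equivalent if there is a linear isomorphism $f:V\to W$ with $f\pi(x)=\nu(x)f$ for all $x\in A$ and $fa=bf$. Equivalence of Lie algebra representations is the usual one. *)

theory Defs
  imports "HOL-Library.Function_Algebras" "Jordan_Normal_Form.Matrix"
begin

definition jordan_algebra_with_unit ::
  "('k::field \<Rightarrow> 'a::ab_group_add \<Rightarrow> 'a) \<Rightarrow> ('a \<Rightarrow> 'a \<Rightarrow> 'a) \<Rightarrow> 'a \<Rightarrow> bool" where
  "jordan_algebra_with_unit sA m e \<longleftrightarrow>
     vector_space sA \<and>
     (\<forall>x y z. m (x + y) z = m x z + m y z) \<and>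
     (\<forall>c x y. m (sA c x) y = sA c (m x y)) \<and>
     (\<forall>x y. m x y = m y x) \<and>
     (\<forall>x y. m (m (m x x) y) x = m (m x x) (m y x)) \<and>
     (\<forall>x. m e x = x)"

inductive_set lspan :: "('k \<Rightarrow> 'b::ab_group_add \<Rightarrow> 'b) \<Rightarrow> 'b set \<Rightarrow> 'b set"
  for sc :: "'k \<Rightarrow> 'b \<Rightarrow> 'b" and S :: "'b set" where
  lspan_zero: "0 \<in> lspan sc S"
| lspan_base: "x \<in> S \<Longrightarrow> x \<in> lspan sc S"
| lspan_add: "x \<in> lspan sc S \<Longrightarrow> y \<in> lspan sc S \<Longrightarrow> x + y \<in> lspan sc S"
| lspan_scale: "x \<in> lspan sc S \<Longrightarrow> sc c x \<in> lspan sc S"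

text \<open>Elements of L(A) are triples (u, S, B) with u in U_{-1} = A,
  S in U_0 (endomorphisms of A) and B in U_1 (bilinear maps A x A -> A).\<close>

type_synonym 'a LAel = "'a \<times> ('a \<Rightarrow> 'a) \<times> ('a \<Rightarrow> 'a \<Rightarrow> 'a)"

definition Lop :: "('a \<Rightarrow> 'a \<Rightarrow> 'a) \<Rightarrow> 'a \<Rightarrow> ('a \<Rightarrow> 'a)" where
  "Lop m a = (\<lambda>x. m a x)"

definition Abar :: "('a \<Rightarrow> 'a \<Rightarrow> 'a) \<Rightarrow> ('a \<Rightarrow> 'a \<Rightarrow> 'a)" where
  "Abar m = (\<lambda>x y. m x y)"

definition Aop :: "('a::ab_group_add \<Rightarrow> 'a \<Rightarrow> 'a) \<Rightarrow> 'a \<Rightarrow> ('a \<Rightarrow> 'a \<Rightarrow> 'a)" where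
  "Aop m a = (\<lambda>x y. m (m x a) y + m (m y a) x - m a (m x y))"

definition U0 :: "('k \<Rightarrow> 'a::ab_group_add \<Rightarrow> 'a) \<Rightarrow> ('a \<Rightarrow> 'a \<Rightarrow> 'a) \<Rightarrow> ('a \<Rightarrow> 'a) set" where
  "U0 sA m = lspan (\<lambda>c f. (\<lambda>x. sA c (f x)))
      (range (Lop m) \<union> {(\<lambda>x. Lop m a (Lop m b x) - Lop m b (Lop m a x)) | a b. True})"

definition U1 :: "('k \<Rightarrow> 'a::ab_group_add \<Rightarrow> 'a) \<Rightarrow> ('a \<Rightarrow> 'a \<Rightarrow> 'a) \<Rightarrow> ('a \<Rightarrow> 'a \<Rightarrow> 'a) set" where
  "U1 sA m = lspan (\<lambda>c B. (\<lambda>x y. sA c (B x y))) ({Abar m} \<union> range (Aop m))"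

definition LA :: "('k \<Rightarrow> 'a::ab_group_add \<Rightarrow> 'a) \<Rightarrow> ('a \<Rightarrow> 'a \<Rightarrow> 'a) \<Rightarrow> 'a LAel set" where
  "LA sA m = {(u, S, B). S \<in> U0 sA m \<and> B \<in> U1 sA m}"

definition la_add :: "'a::ab_group_add LAel \<Rightarrow> 'a LAel \<Rightarrow> 'a LAel" where
  "la_add X Y = (case X of (u1, S1, B1) \<Rightarrow> case Y of (u2, S2, B2) \<Rightarrow>
      (u1 + u2, (\<lambda>x. S1 x + S2 x), (\<lambda>x y. B1 x y + B2 x y)))"

definition la_scale :: "('k \<Rightarrow> 'a \<Rightarrow> 'a) \<Rightarrow> 'k \<Rightarrow> 'a LAel \<Rightarrow> 'a LAel" where
  "la_scale sA c X = (case X of (u, S, B) \<Rightarrow>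
      (sA c u, (\<lambda>x. sA c (S x)), (\<lambda>x y. sA c (B x y))))"

text \<open>The bracket, extended bilinearly from: [a,b]=0 on U_{-1}, [B1,B2]=0 on U_1,
  [S,a]=S a, [S1,S2]=S1 S2 - S2 S1, [B,a]=(y \<mapsto> B(a,y)),
  [S,B]=((x,y) \<mapsto> S(B(x,y)) - B(Sx,y) - B(x,Sy)), skew-symmetric.\<close>

definition la_bracket :: "'a::ab_group_add LAel \<Rightarrow> 'a LAel \<Rightarrow> 'a LAel" where
  "la_bracket X Y = (case X of (u1, S1, B1) \<Rightarrow> case Y of (u2, S2, B2) \<Rightarrow>
      (S1 u2 - S2 u1,
       (\<lambda>y. S1 (S2 y) - S2 (S1 y) + B1 u2 y - B2 u1 y),
       (\<lambda>x y. (S1 (B2 x y) - B2 (S1 x) y - B2 x (S1 y))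
            - (S2 (B1 x y) - B1 (S2 x) y - B1 x (S2 y)))))"

text \<open>Finite-dimensional spaces V are identified with k^n (n = dim V); End V with
  n x n matrices.  An invariant subspace for a family of matrices.\<close>

definition subspace_vec :: "nat \<Rightarrow> 'k::field vec set \<Rightarrow> bool" where
  "subspace_vec n W \<longleftrightarrow> W \<subseteq> carrier_vec n \<and> 0\<^sub>v n \<in> W \<and>
     (\<forall>v\<in>W. \<forall>w\<in>W. v + w \<in> W) \<and> (\<forall>c. \<forall>v\<in>W. c \<cdot>\<^sub>v v \<in> W)"

definition irreducible_family :: "nat \<Rightarrow> 'k::field mat set \<Rightarrow> bool" where
  "irreducible_family n F \<longleftrightarrow> n > 0 \<and>
     \<not> (\<exists>W. subspace_vec n W \<and> W \<noteq> {0\<^sub>v n} \<and> W \<noteq> carrier_vec n \<and>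
            (\<forall>M\<in>F. \<forall>w\<in>W. M *\<^sub>v w \<in> W))"

definition lie_rep ::
  "('k::field \<Rightarrow> 'a::ab_group_add \<Rightarrow> 'a) \<Rightarrow> ('a \<Rightarrow> 'a \<Rightarrow> 'a) \<Rightarrow> nat \<Rightarrow> ('a LAel \<Rightarrow> 'k mat) \<Rightarrow> bool" where
  "lie_rep sA m n \<rho> \<longleftrightarrow>
     (\<forall>X\<in>LA sA m. \<rho> X \<in> carrier_mat n n) \<and>
     (\<forall>X\<in>LA sA m. \<forall>Y\<in>LA sA m. \<rho> (la_add X Y) = \<rho> X + \<rho> Y) \<and>
     (\<forall>c. \<forall>X\<in>LA sA m. \<rho> (la_scale sA c X) = c \<cdot>\<^sub>m \<rho> X) \<and>
     (\<forall>X\<in>LA sA m. \<forall>Y\<in>LA sA m. \<rho> (la_bracket X Y) = \<rho> X * \<rho> Y - \<rho> Y * \<rho> X)"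

definition irreducible_lie_rep ::
  "('k::field \<Rightarrow> 'a::ab_group_add \<Rightarrow> 'a) \<Rightarrow> ('a \<Rightarrow> 'a \<Rightarrow> 'a) \<Rightarrow> nat \<Rightarrow> ('a LAel \<Rightarrow> 'k mat) \<Rightarrow> bool" where
  "irreducible_lie_rep sA m n \<rho> \<longleftrightarrow> lie_rep sA m n \<rho> \<and> irreducible_family n (\<rho> ` LA sA m)"

definition lie_rep_equiv ::
  "('k::field \<Rightarrow> 'a::ab_group_add \<Rightarrow> 'a) \<Rightarrow> ('a \<Rightarrow> 'a \<Rightarrow> 'a) \<Rightarrow>
   nat \<Rightarrow> ('a LAel \<Rightarrow> 'k mat) \<Rightarrow> nat \<Rightarrow> ('a LAel \<Rightarrow> 'k mat) \<Rightarrow> bool" where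
  "lie_rep_equiv sA m n \<rho> n' \<rho>' \<longleftrightarrow> n = n' \<and>
     (\<exists>P\<in>carrier_mat n n. invertible_mat P \<and> (\<forall>X\<in>LA sA m. P * \<rho> X = \<rho>' X * P))"

definition jprod_a :: "'k::field mat \<Rightarrow> 'k mat \<Rightarrow> 'k mat \<Rightarrow> 'k mat" where
  "jprod_a a x y = x * a * y + y * a * x - a * x * y - y * x * a"

definition mcomm :: "'k::field mat \<Rightarrow> 'k mat \<Rightarrow> 'k mat" where
  "mcomm x y = x * y - y * x"

definition gen_rep ::
  "('k::field \<Rightarrow> 'a::ab_group_add \<Rightarrow> 'a) \<Rightarrow> ('a \<Rightarrow> 'a \<Rightarrow> 'a) \<Rightarrow> 'a \<Rightarrow> nat \<Rightarrow>
   ('a \<Rightarrow> 'k mat) \<Rightarrow> 'k mat \<Rightarrow> bool" where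
  "gen_rep sA m e n \<pi> a \<longleftrightarrow>
     a \<in> carrier_mat n n \<and> (\<forall>x. \<pi> x \<in> carrier_mat n n) \<and>
     (\<forall>x y. \<pi> (x + y) = \<pi> x + \<pi> y) \<and> (\<forall>c x. \<pi> (sA c x) = c \<cdot>\<^sub>m \<pi> x) \<and>
     (\<forall>x y. \<pi> (m x y) = jprod_a a (\<pi> x) (\<pi> y)) \<and>
     mcomm a (mcomm (\<pi> e) a) = a"

definition irreducible_gen_rep ::
  "('k::field \<Rightarrow> 'a::ab_group_add \<Rightarrow> 'a) \<Rightarrow> ('a \<Rightarrow> 'a \<Rightarrow> 'a) \<Rightarrow> 'a \<Rightarrow> nat \<Rightarrow>
   ('a \<Rightarrow> 'k mat) \<Rightarrow> 'k mat \<Rightarrow> bool" where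
  "irreducible_gen_rep sA m e n \<pi> a \<longleftrightarrow>
     gen_rep sA m e n \<pi> a \<and> irreducible_family n (insert a (range \<pi>))"

definition gen_rep_equiv ::
  "nat \<Rightarrow> ('a \<Rightarrow> 'k::field mat) \<Rightarrow> 'k mat \<Rightarrow> nat \<Rightarrow> ('a \<Rightarrow> 'k mat) \<Rightarrow> 'k mat \<Rightarrow> bool" where
  "gen_rep_equiv n \<pi> a n' \<nu> b \<longleftrightarrow> n = n' \<and>
     (\<exists>P\<in>carrier_mat n n. invertible_mat P \<and> (\<forall>x. P * \<pi> x = \<nu> x * P) \<and> P * a = b * P)"

definition Phi_pi :: "('a::ab_group_add \<Rightarrow> 'a \<Rightarrow> 'a) \<Rightarrow> ('a LAel \<Rightarrow> 'k::field mat) \<Rightarrow> 'a \<Rightarrow> 'k mat" where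
  "Phi_pi m \<rho> = (\<lambda>x. \<rho> (x, (\<lambda>_. 0), (\<lambda>_ _. 0)))"

definition Phi_a :: "('a::ab_group_add \<Rightarrow> 'a \<Rightarrow> 'a) \<Rightarrow> ('a LAel \<Rightarrow> 'k::field mat) \<Rightarrow> 'k mat" where
  "Phi_a m \<rho> = - \<rho> (0, (\<lambda>_. 0), Abar m)"

end

theory Submission
  imports Defs "Jordan_Normal_Form.Determinant"
begin

declare minus_carrier_mat[simp]

definition br :: "'k::field mat \<Rightarrow> 'k mat \<Rightarrow> 'k mat" where "br X Y = X * Y - Y * X"

definition ent :: "nat \<Rightarrow> 'k::field mat \<Rightarrow> nat \<times> nat \<Rightarrow> 'k" where
  "ent n M = (\<lambda>(i,j). if i < n \<and> j < n then M $$ (i,j) else 0)"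

lemma ent_eq_iff:
  assumes "M \<in> carrier_mat n n" "N \<in> carrier_mat n n"
  shows "(M = N) = (ent n M = ent n N)"
proof
  assume h: "ent n M = ent n N"
  show "M = N"
  proof (rule eq_matI)
    fix i j assume ij: "i < dim_row N" "j < dim_col N"
    have "ent n M (i,j) = ent n N (i,j)" using h by simp
    with ij assms show "M $$ (i,j) = N $$ (i,j)" by (simp add: ent_def)
  qed (use assms in auto)
qed simp

lemma ent_add[simp]: "M \<in> carrier_mat n n \<Longrightarrow> N \<in> carrier_mat n n \<Longrightarrow> ent n (M + N) = ent n M + ent n N"
  by (auto simp: ent_def fun_eq_iff)
lemma ent_minus[simp]: "M \<in> carrier_mat n n \<Longrightarrow> N \<in> carrier_mat n n \<Longrightarrow> ent n (M - N) = ent n M - ent n N"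
  by (auto simp: ent_def fun_eq_iff)
lemma ent_uminus[simp]: "M \<in> carrier_mat n n \<Longrightarrow> ent n (- M) = - ent n M"
  by (auto simp: ent_def fun_eq_iff)
lemma ent_smult[simp]: "M \<in> carrier_mat n n \<Longrightarrow> ent n (c \<cdot>\<^sub>m M) = (\<lambda>x. c * ent n M x)"
  by (auto simp: ent_def fun_eq_iff)
lemma ent_zero[simp]: "ent n (0\<^sub>m n n) = 0"
  by (auto simp: ent_def fun_eq_iff)

lemma br_carrier[simp]: "X \<in> carrier_mat n n \<Longrightarrow> Y \<in> carrier_mat n n \<Longrightarrow> br X Y \<in> carrier_mat n n"
  by (simp add: br_def)

lemmas mat_distr = mult_minus_distrib_mat minus_mult_distrib_mat add_mult_distrib_mat mult_add_distrib_mat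
   mult_smult_distrib mult_smult_assoc_mat

context fixes n :: nat begin

lemma md1: "(A::'k::field mat) \<in> carrier_mat n n \<Longrightarrow> B \<in> carrier_mat n n \<Longrightarrow> C \<in> carrier_mat n n \<Longrightarrow> (A - B) * C = A * C - B * C"
  by (metis minus_mult_distrib_mat)
lemma md2: "(A::'k::field mat) \<in> carrier_mat n n \<Longrightarrow> B \<in> carrier_mat n n \<Longrightarrow> C \<in> carrier_mat n n \<Longrightarrow> C * (A - B) = C * A - C * B"
  by (metis mult_minus_distrib_mat)
lemma md3: "(A::'k::field mat) \<in> carrier_mat n n \<Longrightarrow> B \<in> carrier_mat n n \<Longrightarrow> C \<in> carrier_mat n n \<Longrightarrow> (A + B) * C = A * C + B * C"
  by (metis add_mult_distrib_mat)
lemma md4: "(A::'k::field mat) \<in> carrier_mat n n \<Longrightarrow> B \<in> carrier_mat n n \<Longrightarrow> C \<in> carrier_mat n n \<Longrightarrow> C * (A + B) = C * A + C * B"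
  by (metis mult_add_distrib_mat)
lemma md5: "(A::'k::field mat) \<in> carrier_mat n n \<Longrightarrow> B \<in> carrier_mat n n \<Longrightarrow> A * (c \<cdot>\<^sub>m B) = c \<cdot>\<^sub>m (A * B)"
  by (metis mult_smult_distrib)
lemma md6: "(A::'k::field mat) \<in> carrier_mat n n \<Longrightarrow> B \<in> carrier_mat n n \<Longrightarrow> (c \<cdot>\<^sub>m A) * B = c \<cdot>\<^sub>m (A * B)"
  by (metis mult_smult_assoc_mat)
lemma md7: "(A::'k::field mat) \<in> carrier_mat n n \<Longrightarrow> B \<in> carrier_mat n n \<Longrightarrow> C \<in> carrier_mat n n \<Longrightarrow> (A * B) * C = A * (B * C)"
  by (metis assoc_mult_mat)
lemmas md = md1 md2 md3 md4 md5 md6 md7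

lemma br_add_left: "X \<in> carrier_mat n n \<Longrightarrow> Y \<in> carrier_mat n n \<Longrightarrow> Z \<in> carrier_mat n n \<Longrightarrow>
  br (X + Y) Z = br X Z + br Y Z"
  by (simp add: br_def md ent_eq_iff[of _ n] fun_eq_iff algebra_simps)

lemma br_add_right: "X \<in> carrier_mat n n \<Longrightarrow> Y \<in> carrier_mat n n \<Longrightarrow> Z \<in> carrier_mat n n \<Longrightarrow>
  br Z (X + Y) = br Z X + br Z Y"
  by (simp add: br_def md ent_eq_iff[of _ n] fun_eq_iff algebra_simps)

lemma br_minus_left: "X \<in> carrier_mat n n \<Longrightarrow> Y \<in> carrier_mat n n \<Longrightarrow> Z \<in> carrier_mat n n \<Longrightarrow>
  br (X - Y) Z = br X Z - br Y Z"
  by (simp add: br_def md ent_eq_iff[of _ n] fun_eq_iff algebra_simps)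

lemma br_minus_right: "X \<in> carrier_mat n n \<Longrightarrow> Y \<in> carrier_mat n n \<Longrightarrow> Z \<in> carrier_mat n n \<Longrightarrow>
  br Z (X - Y) = br Z X - br Z Y"
  by (simp add: br_def md ent_eq_iff[of _ n] fun_eq_iff algebra_simps)

lemma br_smult_left: "X \<in> carrier_mat n n \<Longrightarrow> Y \<in> carrier_mat n n \<Longrightarrow> br (c \<cdot>\<^sub>m X) Y = c \<cdot>\<^sub>m br X Y"
  by (simp add: br_def md ent_eq_iff[of _ n] fun_eq_iff algebra_simps)

lemma br_smult_right: "X \<in> carrier_mat n n \<Longrightarrow> Y \<in> carrier_mat n n \<Longrightarrow> br X (c \<cdot>\<^sub>m Y) = c \<cdot>\<^sub>m br X Y"
  by (simp add: br_def md ent_eq_iff[of _ n] fun_eq_iff algebra_simps)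

lemma br_uminus_left: "X \<in> carrier_mat n n \<Longrightarrow> Y \<in> carrier_mat n n \<Longrightarrow> br (- X) Y = - br X Y"
  by (simp add: br_def md ent_eq_iff[of _ n] fun_eq_iff algebra_simps)

lemma br_uminus_right: "X \<in> carrier_mat n n \<Longrightarrow> Y \<in> carrier_mat n n \<Longrightarrow> br X (- Y) = - br X Y"
  by (simp add: br_def md ent_eq_iff[of _ n] fun_eq_iff algebra_simps)

lemma br_antisym: "X \<in> carrier_mat n n \<Longrightarrow> Y \<in> carrier_mat n n \<Longrightarrow> br Y X = - br X Y"
  by (simp add: br_def md ent_eq_iff[of _ n] fun_eq_iff algebra_simps)

lemma br_self[simp]: "X \<in> carrier_mat n n \<Longrightarrow> br X X = 0\<^sub>m n n"
  by (simp add: br_def md ent_eq_iff[of _ n] fun_eq_iff algebra_simps)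

lemma br_zero_left[simp]: "X \<in> carrier_mat n n \<Longrightarrow> br (0\<^sub>m n n) X = 0\<^sub>m n n"
  by (simp add: br_def md ent_eq_iff[of _ n] fun_eq_iff algebra_simps)

lemma br_zero_right[simp]: "X \<in> carrier_mat n n \<Longrightarrow> br X (0\<^sub>m n n) = 0\<^sub>m n n"
  by (simp add: br_def md ent_eq_iff[of _ n] fun_eq_iff algebra_simps)

lemma jacobi: "X \<in> carrier_mat n n \<Longrightarrow> Y \<in> carrier_mat n n \<Longrightarrow> Z \<in> carrier_mat n n \<Longrightarrow>
  br X (br Y Z) = br (br X Y) Z + br Y (br X Z)"
  by (simp add: br_def md ent_eq_iff[of _ n] fun_eq_iff algebra_simps)

lemma jprod_br: "X \<in> carrier_mat n n \<Longrightarrow> Y \<in> carrier_mat n n \<Longrightarrow> A \<in> carrier_mat n n \<Longrightarrow>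
  jprod_a A X Y = br (br X A) Y"
  by (simp add: jprod_a_def br_def md ent_eq_iff[of _ n] fun_eq_iff algebra_simps)

end

definition mtr :: "'k::field mat \<Rightarrow> 'k" where "mtr A = (\<Sum>i<dim_row A. A $$ (i,i))"

lemma index_mult_sum:
  assumes "A \<in> carrier_mat n m" "B \<in> carrier_mat m k" "r < n" "s < k"
  shows "(A * B) $$ (r,s) = (\<Sum>t<m. A $$ (r,t) * B $$ (t,s))"
  using assms by (simp add: scalar_prod_def atLeast0LessThan)

lemma mtr_comm:
  assumes A: "(A::'k::field mat) \<in> carrier_mat n m" and B: "B \<in> carrier_mat m n"
  shows "mtr (A * B) = mtr (B * A)"
proof -
  have "mtr (A * B) = (\<Sum>i<n. \<Sum>t<m. A $$ (i,t) * B $$ (t,i))"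
    unfolding mtr_def using A B by (auto simp: scalar_prod_def atLeast0LessThan intro!: sum.cong)
  also have "\<dots> = (\<Sum>t<m. \<Sum>i<n. B $$ (t,i) * A $$ (i,t))"
    by (subst sum.swap) (simp add: mult.commute)
  also have "\<dots> = mtr (B * A)"
    unfolding mtr_def using A B by (auto simp: scalar_prod_def atLeast0LessThan intro!: sum.cong)
  finally show ?thesis .
qed

lemma mtr_add: "A \<in> carrier_mat n n \<Longrightarrow> B \<in> carrier_mat n n \<Longrightarrow> mtr (A + B) = mtr A + mtr B"
  by (simp add: mtr_def sum.distrib)
lemma mtr_minus: "A \<in> carrier_mat n n \<Longrightarrow> B \<in> carrier_mat n n \<Longrightarrow> mtr (A - B) = mtr A - mtr B"
  by (simp add: mtr_def sum_subtractf)
lemma mtr_smult: "A \<in> carrier_mat n n \<Longrightarrow> mtr (c \<cdot>\<^sub>m A) = c * mtr A"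
  by (simp add: mtr_def sum_distrib_left)
lemma mtr_zero: "mtr (0\<^sub>m n n :: 'k::field mat) = 0"
  by (simp add: mtr_def)
lemma mtr_one: "mtr (1\<^sub>m n :: 'k::field mat) = of_nat n"
  by (simp add: mtr_def)

lemma eig_seq_zero:
  fixes h :: "'k::field mat" and Z :: "nat \<Rightarrow> 'k mat" and \<mu> :: "nat \<Rightarrow> 'k"
  assumes h: "h \<in> carrier_mat n n" and Z: "\<And>k. Z k \<in> carrier_mat n n"
    and eig: "\<And>k. h * Z k - Z k * h = \<mu> k \<cdot>\<^sub>m Z k" and inj: "inj \<mu>"
  shows "\<exists>k. Z k = 0\<^sub>m n n"
proof -
  define N where "N = n * n"
  define M :: "'k mat" where "M = mat (Suc N) (Suc N) (\<lambda>(i,k). if i < N then Z k $$ (i div n, i mod n) else 0)"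
  have Mc: "M \<in> carrier_mat (Suc N) (Suc N)" unfolding M_def by simp
  have "M = mat\<^sub>r (Suc N) (Suc N) (\<lambda>i. if i = N then 0\<^sub>v (Suc N) else row M i)"
    by (rule eq_matI) (auto simp: M_def)
  then have "det M = 0"
    using det_row_0[of N "Suc N" "\<lambda>i. row M i"] Mc by auto
  then obtain v where v: "v \<in> carrier_vec (Suc N)" "v \<noteq> 0\<^sub>v (Suc N)" "M *\<^sub>v v = 0\<^sub>v (Suc N)"
    using det_0_iff_vec_prod_zero_field[OF Mc] by auto
  define c where "c k = v $ k" for k
  define S where "S g = (\<forall>r<n. \<forall>s<n. (\<Sum>k<Suc N. g k * c k * Z k $$ (r,s)) = 0)" for g
  have S1: "S (\<lambda>k. 1)"
    unfolding S_def
  proof (intro allI impI)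
    fix r s assume rs: "r < n" "s < n"
    define i where "i = r * n + s"
    have i1: "r * n + s < Suc r * n" using rs by simp
    have i2: "Suc r * n \<le> n * n" using rs by (intro mult_le_mono1) simp
    have i: "i < N" unfolding i_def N_def using i1 i2 by linarith
    have idiv: "i div n = r" "i mod n = s" unfolding i_def using rs by auto
    have "(M *\<^sub>v v) $ i = 0" using v(3) i by simp
    then have "(\<Sum>k<Suc N. M $$ (i,k) * v $ k) = 0"
      using Mc v(1) i by (simp add: scalar_prod_def atLeast0LessThan)
    then show "(\<Sum>k<Suc N. 1 * c k * Z k $$ (r,s)) = 0"
      unfolding c_def using i idiv by (simp add: M_def mult.commute)
  qed
  have Sstep: "S (\<lambda>k. (\<mu> k - \<mu> j) * g k)" if Sg: "S g" for g j
    unfolding S_def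
  proof (intro allI impI)
    fix r s assume rs: "r < n" "s < n"
    have e: "\<mu> k * Z k $$ (r,s) = (\<Sum>t<n. h $$ (r,t) * Z k $$ (t,s)) - (\<Sum>t<n. Z k $$ (r,t) * h $$ (t,s))" for k
    proof -
      have "\<mu> k * Z k $$ (r,s) = (\<mu> k \<cdot>\<^sub>m Z k) $$ (r,s)" using Z[of k] rs by simp
      also have "\<dots> = (h * Z k - Z k * h) $$ (r,s)" using eig by simp
      also have "\<dots> = (h * Z k) $$ (r,s) - (Z k * h) $$ (r,s)" using Z[of k] h rs by simp
      finally show ?thesis using index_mult_sum[OF h Z[of k] rs] index_mult_sum[OF Z[of k] h rs] by simp
    qed
    have "(\<Sum>k<Suc N. \<mu> k * g k * c k * Z k $$ (r,s))
        = (\<Sum>k<Suc N. g k * c k * ((\<Sum>t<n. h $$ (r,t) * Z k $$ (t,s)) - (\<Sum>t<n. Z k $$ (r,t) * h $$ (t,s))))"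
      by (rule sum.cong, simp, subst e[symmetric], simp add: ac_simps)
    also have "\<dots> = (\<Sum>t<n. h $$ (r,t) * (\<Sum>k<Suc N. g k * c k * Z k $$ (t,s)))
                 - (\<Sum>t<n. (\<Sum>k<Suc N. g k * c k * Z k $$ (r,t)) * h $$ (t,s))"
    proof -
      have pk: "g k * c k * ((\<Sum>t<n. h $$ (r,t) * Z k $$ (t,s)) - (\<Sum>t<n. Z k $$ (r,t) * h $$ (t,s)))
         = (\<Sum>t<n. h $$ (r,t) * (g k * c k * Z k $$ (t,s))) - (\<Sum>t<n. (g k * c k * Z k $$ (r,t)) * h $$ (t,s))" for k
        by (simp add: right_diff_distrib sum_distrib_left mult_ac)
      have "(\<Sum>k<Suc N. g k * c k * ((\<Sum>t<n. h $$ (r,t) * Z k $$ (t,s)) - (\<Sum>t<n. Z k $$ (r,t) * h $$ (t,s))))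
          = (\<Sum>k<Suc N. \<Sum>t<n. h $$ (r,t) * (g k * c k * Z k $$ (t,s))) - (\<Sum>k<Suc N. \<Sum>t<n. (g k * c k * Z k $$ (r,t)) * h $$ (t,s))"
        unfolding pk by (rule sum_subtractf)
      also have "\<dots> = (\<Sum>t<n. \<Sum>k<Suc N. h $$ (r,t) * (g k * c k * Z k $$ (t,s))) - (\<Sum>t<n. \<Sum>k<Suc N. (g k * c k * Z k $$ (r,t)) * h $$ (t,s))"
        by (simp only: sum.swap[of _ "{..<Suc N}"])
      also have "\<dots> = (\<Sum>t<n. h $$ (r,t) * (\<Sum>k<Suc N. g k * c k * Z k $$ (t,s)))
                 - (\<Sum>t<n. (\<Sum>k<Suc N. g k * c k * Z k $$ (r,t)) * h $$ (t,s))"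
        by (simp only: sum_distrib_left sum_distrib_right)
      finally show ?thesis .
    qed
    also have "\<dots> = 0" using Sg rs unfolding S_def by simp
    finally have A: "(\<Sum>k<Suc N. \<mu> k * g k * c k * Z k $$ (r,s)) = 0" .
    have B: "(\<Sum>k<Suc N. g k * c k * Z k $$ (r,s)) = 0" using Sg rs unfolding S_def by simp
    have "(\<Sum>k<Suc N. (\<mu> k - \<mu> j) * g k * c k * Z k $$ (r,s))
        = (\<Sum>k<Suc N. \<mu> k * g k * c k * Z k $$ (r,s)) - \<mu> j * (\<Sum>k<Suc N. g k * c k * Z k $$ (r,s))"
    proof -
      have pk: "(\<mu> k - \<mu> j) * g k * c k * Z k $$ (r,s) = \<mu> k * g k * c k * Z k $$ (r,s) - \<mu> j * (g k * c k * Z k $$ (r,s))" for k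
        by (simp add: algebra_simps)
      show ?thesis unfolding pk sum_subtractf sum_distrib_left by simp
    qed
    then show "(\<Sum>k<Suc N. ((\<mu> k - \<mu> j) * g k) * c k * Z k $$ (r,s)) = 0" using A B by simp
  qed
  have Sprod: "finite J \<Longrightarrow> S (\<lambda>k. \<Prod>j\<in>J. (\<mu> k - \<mu> j))" for J
  proof (induction J rule: finite_induct)
    case empty then show ?case using S1 by simp
  next
    case (insert j J)
    then show ?case using Sstep[OF insert.IH, of j] by simp
  qed
  from v(1,2) obtain i where i: "i < Suc N" "c i \<noteq> 0"
  proof -
    have "\<exists>i<Suc N. v $ i \<noteq> 0"
    proof (rule ccontr)
      assume "\<not> ?thesis"
      then have "v = 0\<^sub>v (Suc N)" using v(1) by (intro eq_vecI) auto
      with v(2) show False by simp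
    qed
    then show ?thesis using that unfolding c_def by blast
  qed
  define J where "J = {..<Suc N} - {i}"
  have SJ: "S (\<lambda>k. \<Prod>j\<in>J. (\<mu> k - \<mu> j))" using Sprod J_def by simp
  have pnz: "(\<Prod>j\<in>J. (\<mu> i - \<mu> j)) \<noteq> 0"
    using inj unfolding J_def by (auto simp: inj_eq)
  have "Z i = 0\<^sub>m n n"
  proof (rule eq_matI)
    fix r s assume rs: "r < dim_row (0\<^sub>m n n :: 'k mat)" "s < dim_col (0\<^sub>m n n :: 'k mat)"
    then have rs': "r < n" "s < n" by auto
    have "(\<Sum>k<Suc N. (\<Prod>j\<in>J. (\<mu> k - \<mu> j)) * c k * Z k $$ (r,s)) =
          (\<Prod>j\<in>J. (\<mu> i - \<mu> j)) * c i * Z i $$ (r,s)"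
    proof -
      have "(\<Sum>k<Suc N. (\<Prod>j\<in>J. (\<mu> k - \<mu> j)) * c k * Z k $$ (r,s)) =
          (\<Prod>j\<in>J. (\<mu> i - \<mu> j)) * c i * Z i $$ (r,s) +
          (\<Sum>k\<in>J. (\<Prod>j\<in>J. (\<mu> k - \<mu> j)) * c k * Z k $$ (r,s))"
        unfolding J_def using i(1) by (subst sum.remove[of _ i]) auto
      also have "(\<Sum>k\<in>J. (\<Prod>j\<in>J. (\<mu> k - \<mu> j)) * c k * Z k $$ (r,s)) = 0"
        by (rule sum.neutral) (auto simp: J_def intro!: prod_zero)
      finally show ?thesis by simp
    qed
    then have "(\<Prod>j\<in>J. (\<mu> i - \<mu> j)) * c i * Z i $$ (r,s) = 0"
      using SJ rs' unfolding S_def by simp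
    then show "Z i $$ (r,s) = 0\<^sub>m n n $$ (r,s)" using pnz i(2) rs' by simp
  qed (use Z in auto)
  then show ?thesis by blast
qed


lemma smult_eq_zero_mat:
  assumes "(A::'k::field mat) \<in> carrier_mat n n" "c \<cdot>\<^sub>m A = 0\<^sub>m n n" "c \<noteq> 0"
  shows "A = 0\<^sub>m n n"
proof (rule eq_matI)
  fix i j assume "i < dim_row (0\<^sub>m n n :: 'k mat)" "j < dim_col (0\<^sub>m n n :: 'k mat)"
  then have ij: "i < n" "j < n" by auto
  have "c * A $$ (i,j) = 0" using arg_cong[OF assms(2), of "\<lambda>M. M $$ (i,j)"] ij assms(1) by simp
  then show "A $$ (i,j) = 0\<^sub>m n n $$ (i,j)" using assms ij by simp
qed (use assms in auto)

lemma sl2_lowest: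
  fixes E F h Y :: "'k::field_char_0 mat" and p :: nat
  assumes E: "E \<in> carrier_mat n n" and F: "F \<in> carrier_mat n n" and Y: "Y \<in> carrier_mat n n"
    and hdef: "h = br E F" and hE: "br h E = E" and hF: "br h F = - F"
    and EY: "br E Y = 0\<^sub>m n n" and hY: "br h Y = - (of_nat p) \<cdot>\<^sub>m Y" and p: "p > 0"
  shows "Y = 0\<^sub>m n n"
proof -
  have h: "h \<in> carrier_mat n n" using hdef E F by simp
  define Ys where "Ys k = ((\<lambda>X. br F X) ^^ k) Y" for k
  have Ys0: "Ys 0 = Y" and YsS: "Ys (Suc k) = br F (Ys k)" for k by (simp_all add: Ys_def)
  have Ysc: "Ys k \<in> carrier_mat n n" for k by (induction k) (use Y F in \<open>simp_all add: Ys0 YsS\<close>)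
  have wt: "br h (Ys k) = - (of_nat (p + k)) \<cdot>\<^sub>m Ys k" for k
  proof (induction k)
    case 0 then show ?case using hY by (simp add: Ys0)
  next
    case (Suc k)
    have "br h (Ys (Suc k)) = br (br h F) (Ys k) + br F (br h (Ys k))"
      unfolding YsS using jacobi[OF h F Ysc] .
    also have "\<dots> = br (- F) (Ys k) + br F (- (of_nat (p + k)) \<cdot>\<^sub>m Ys k)" using hF Suc by simp
    also have "\<dots> = - (of_nat (p + Suc k)) \<cdot>\<^sub>m Ys (Suc k)"
      unfolding YsS using F Ysc[of k]
      by (simp add: br_uminus_left[of _ n] br_smult_right[of _ n] ent_eq_iff[of _ n] fun_eq_iff algebra_simps)
    finally show ?case .
  qed
  define cc :: "nat \<Rightarrow> 'k" where "cc k = - (of_nat (k * (2 * p + k - 1))) / 2" for k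
  have ccS: "cc (Suc (Suc k)) = cc (Suc k) - of_nat (p + Suc k)" for k
  proof -
    have "Suc (Suc k) * (2 * p + Suc (Suc k) - 1) = Suc k * (2 * p + Suc k - 1) + 2 * (p + Suc k)"
      by (simp add: algebra_simps)
    then have "(of_nat (Suc (Suc k) * (2 * p + Suc (Suc k) - 1)) :: 'k) = of_nat (Suc k * (2 * p + Suc k - 1)) + 2 * of_nat (p + Suc k)"
      by (metis of_nat_add of_nat_mult of_nat_numeral)
    then show ?thesis unfolding cc_def by (simp add: field_simps)
  qed
  have cc1: "cc (Suc 0) = - of_nat p" unfolding cc_def by simp
  have ccnz: "cc (Suc k) \<noteq> 0" for k
  proof -
    have "Suc k * (2 * p + Suc k - 1) \<noteq> 0" using p by simp
    then have X: "(of_nat (Suc k * (2 * p + Suc k - 1)) :: 'k) \<noteq> 0" by (metis of_nat_eq_0_iff)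
    show ?thesis unfolding cc_def using X by (metis divide_eq_0_iff neg_equal_0_iff_equal zero_neq_numeral)
  qed
  have Eact: "br E (Ys (Suc k)) = cc (Suc k) \<cdot>\<^sub>m Ys k" for k
  proof (induction k)
    case 0
    have "br E (Ys (Suc 0)) = br (br E F) Y + br F (br E Y)"
      by (simp add: Ys0 YsS jacobi[OF E F Y])
    also have "\<dots> = cc (Suc 0) \<cdot>\<^sub>m Ys 0"
      using hY EY F Y unfolding cc1 Ys0 hdef[symmetric] by simp
    finally show ?case .
  next
    case (Suc k)
    have "br E (Ys (Suc (Suc k))) = br (br E F) (Ys (Suc k)) + br F (br E (Ys (Suc k)))"
      unfolding YsS[of "Suc k"] by (rule jacobi[OF E F Ysc])
    also have "\<dots> = - (of_nat (p + Suc k)) \<cdot>\<^sub>m Ys (Suc k) + br F (cc (Suc k) \<cdot>\<^sub>m Ys k)"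
      by (simp only: hdef[symmetric] wt Suc.IH)
    also have "\<dots> = cc (Suc (Suc k)) \<cdot>\<^sub>m Ys (Suc k)"
      unfolding ccS YsS using F Ysc[of k]
      by (simp add: br_smult_right[of _ n] ent_eq_iff[of _ n] fun_eq_iff algebra_simps)
    finally show ?case .
  qed
  have "\<exists>k. Ys k = 0\<^sub>m n n"
  proof (rule eig_seq_zero[OF h Ysc])
    show "h * Ys k - Ys k * h = (- of_nat (p + k)) \<cdot>\<^sub>m Ys k" for k using wt[of k] by (simp add: br_def)
    show "inj (\<lambda>k. - of_nat (p + k) :: 'k)" by (rule injI) simp
  qed
  then obtain k where k: "Ys k = 0\<^sub>m n n" by blast
  have down: "Ys (Suc j) = 0\<^sub>m n n \<Longrightarrow> Ys j = 0\<^sub>m n n" for j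
  proof -
    assume "Ys (Suc j) = 0\<^sub>m n n"
    then have "cc (Suc j) \<cdot>\<^sub>m Ys j = 0\<^sub>m n n" using Eact[of j] E by simp
    then show ?thesis using smult_eq_zero_mat[OF Ysc[of j] _ ccnz[of j]] by blast
  qed
  have "Ys k = 0\<^sub>m n n \<Longrightarrow> Ys 0 = 0\<^sub>m n n" for k
    by (induction k) (use down in auto)
  then show ?thesis using k Ys0 by simp
qed


lemma smult_one_mat': "(A::'k::field mat) \<in> carrier_mat n n \<Longrightarrow> 1 \<cdot>\<^sub>m A = A"
  by (rule eq_matI) auto
lemma smult_zero_mat': "(A::'k::field mat) \<in> carrier_mat n n \<Longrightarrow> 0 \<cdot>\<^sub>m A = 0\<^sub>m n n"
  by (rule eq_matI) auto

lemma mult_zero_vec': "(M::'k::field mat) \<in> carrier_mat n k \<Longrightarrow> M *\<^sub>v 0\<^sub>v k = 0\<^sub>v n"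
  by (intro eq_vecI) (auto simp: scalar_prod_def)

locale grep_ctx =
  fixes sA :: "'k::field_char_0 \<Rightarrow> 'a::ab_group_add \<Rightarrow> 'a"
    and m :: "'a \<Rightarrow> 'a \<Rightarrow> 'a" and e :: 'a and n :: nat
    and \<pi> :: "'a \<Rightarrow> 'k mat" and a :: "'k mat"
  assumes J: "jordan_algebra_with_unit sA m e"
    and G: "gen_rep sA m e n \<pi> a"
    and Irr: "irreducible_family n (insert a (range \<pi>))"
begin

lemma VS: "vector_space sA" using J unfolding jordan_algebra_with_unit_def by blast
interpretation V: vector_space sA by (rule VS)

lemma madd: "m (x + y) z = m x z + m y z" using J unfolding jordan_algebra_with_unit_def by blast
lemma mcom: "m x y = m y x" using J unfolding jordan_algebra_with_unit_def by blast
lemma mscale: "m (sA c x) y = sA c (m x y)" using J unfolding jordan_algebra_with_unit_def by blast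
lemma munit: "m e x = x" using J unfolding jordan_algebra_with_unit_def by blast
lemma munit2: "m x e = x" using munit mcom by metis
lemma madd2: "m z (x + y) = m z x + m z y" using madd mcom by metis
lemma mzero[simp]: "m 0 y = 0" "m y 0 = 0"
proof -
  have "m 0 y = m 0 y + m 0 y" using madd[of 0 0 y] by simp
  then show "m 0 y = 0" by simp
  then show "m y 0 = 0" using mcom by metis
qed
lemma mdiff: "m (x - y) z = m x z - m y z"
proof -
  have "m x z = m (x - y) z + m y z" using madd[of "x - y" y z] by simp
  then show ?thesis by (simp add: eq_diff_eq)
qed
lemma mdiff2: "m z (x - y) = m z x - m z y" using mdiff mcom by metis

lemma a_car[simp]: "a \<in> carrier_mat n n" using G unfolding gen_rep_def by blast
lemma pi_car[simp]: "\<pi> x \<in> carrier_mat n n" using G unfolding gen_rep_def by blast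
lemma pi_add: "\<pi> (x + y) = \<pi> x + \<pi> y" using G unfolding gen_rep_def by blast
lemma pi_scale: "\<pi> (sA c x) = c \<cdot>\<^sub>m \<pi> x" using G unfolding gen_rep_def by blast
lemma pi_m: "\<pi> (m x y) = br (br (\<pi> x) a) (\<pi> y)"
  using G jprod_br[of "\<pi> x" n "\<pi> y" a] unfolding gen_rep_def by simp
lemma a_rel: "br a (br (\<pi> e) a) = a" using G unfolding gen_rep_def mcomm_def br_def by blast
lemma npos: "n > 0" using Irr unfolding irreducible_family_def by blast

lemma pi_zero[simp]: "\<pi> 0 = 0\<^sub>m n n"
proof -
  have p0: "\<pi> 0 = \<pi> 0 + \<pi> 0" using pi_add[of 0 0] by simp
  have "ent n (\<pi> 0) = ent n (\<pi> 0) + ent n (\<pi> 0)"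
    using arg_cong[OF p0, of "ent n"] unfolding ent_add[OF pi_car pi_car] .
  then have "ent n (\<pi> 0) = ent n (0\<^sub>m n n)" by (metis add_cancel_left_right ent_zero)
  then show ?thesis by (simp only: ent_eq_iff[of _ n, symmetric] pi_car zero_carrier_mat)
qed
lemma pi_diff: "\<pi> (x - y) = \<pi> x - \<pi> y"
proof -
  have "\<pi> x = \<pi> (x - y) + \<pi> y" using pi_add[of "x - y" y] by simp
  then have "ent n (\<pi> x) = ent n (\<pi> (x - y)) + ent n (\<pi> y)" by simp
  then show ?thesis by (simp add: ent_eq_iff[of _ n] algebra_simps)
qed

definition D where "D x = br (\<pi> x) a"
definition h where "h = br (\<pi> e) a"

lemma D_car[simp]: "D x \<in> carrier_mat n n" by (simp add: D_def)
lemma h_car[simp]: "h \<in> carrier_mat n n" by (simp add: h_def)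

lemma D_pi: "br (D x) (\<pi> y) = \<pi> (m x y)" by (simp add: D_def pi_m)
lemma h_pi: "br h (\<pi> x) = \<pi> x" using D_pi[of e x] by (simp add: D_def h_def munit)
lemma h_a: "br h a = - a"
proof -
  have "br a h = a" using a_rel by (simp add: h_def)
  then show ?thesis using br_antisym[of a n h] by simp
qed

inductive Gd :: "int \<Rightarrow> 'k mat \<Rightarrow> bool" where
  g1: "Gd 1 (\<pi> x)"
| g2: "Gd (-1) a"
| g0: "Gd d (0\<^sub>m n n)"
| gadd: "Gd d X \<Longrightarrow> Gd d Y \<Longrightarrow> Gd d (X + Y)"
| gminus: "Gd d X \<Longrightarrow> Gd d Y \<Longrightarrow> Gd d (X - Y)"
| gsmult: "Gd d X \<Longrightarrow> Gd d (c \<cdot>\<^sub>m X)"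
| gbr: "Gd i X \<Longrightarrow> Gd j Y \<Longrightarrow> Gd (i + j) (br X Y)"

lemma Gd_car: "Gd d X \<Longrightarrow> X \<in> carrier_mat n n"
  by (induction rule: Gd.induct) auto

lemma gbr': "Gd i X \<Longrightarrow> Gd j Y \<Longrightarrow> k = i + j \<Longrightarrow> Gd k (br X Y)"
  using gbr by blast

lemma Gd_D: "Gd 0 (D x)" unfolding D_def by (rule gbr'[OF g1 g2]) simp
lemma Gd_h: "Gd 0 h" unfolding h_def by (rule gbr'[OF g1 g2]) simp

lemma Gd_wt: "Gd d X \<Longrightarrow> br h X = of_int d \<cdot>\<^sub>m X"
proof (induction rule: Gd.induct)
  case (g1 x) then show ?case by (simp add: h_pi smult_one_mat'[of _ n])
next
  case g2 then show ?case using h_a by (simp add: ent_eq_iff[of _ n] fun_eq_iff)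
next
  case (g0 d) then show ?case by simp
next
  case (gadd d X Y) then show ?case using Gd_car[OF gadd.hyps(1)] Gd_car[OF gadd.hyps(2)]
    by (simp add: br_add_right[of _ n] ent_eq_iff[of _ n] fun_eq_iff algebra_simps)
next
  case (gminus d X Y) then show ?case using Gd_car[OF gminus.hyps(1)] Gd_car[OF gminus.hyps(2)]
    by (simp add: br_minus_right[of _ n] ent_eq_iff[of _ n] fun_eq_iff algebra_simps)
next
  case (gsmult d X c) then show ?case using Gd_car[OF gsmult.hyps(1)]
    by (simp add: br_smult_right[of _ n] ent_eq_iff[of _ n] fun_eq_iff algebra_simps)
next
  case (gbr i X j Y)
  note X = Gd_car[OF gbr.hyps(1)] and Y = Gd_car[OF gbr.hyps(2)]
  have "br h (br X Y) = br (br h X) Y + br X (br h Y)" using jacobi[OF h_car X Y] .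
  also have "\<dots> = br (of_int i \<cdot>\<^sub>m X) Y + br X (of_int j \<cdot>\<^sub>m Y)" using gbr.IH by simp
  also have "\<dots> = of_int (i + j) \<cdot>\<^sub>m br X Y" using X Y
    by (simp add: br_smult_right[of _ n] br_smult_left[of _ n] ent_eq_iff[of _ n] fun_eq_iff algebra_simps)
  finally show ?case .
qed

lemma Gd0_h: "Gd 0 X \<Longrightarrow> br h X = 0\<^sub>m n n"
  using Gd_wt[of 0 X] Gd_car[of 0 X] by (simp add: smult_zero_mat'[of _ n])

lemma Gd_commutes:
  assumes M: "M \<in> carrier_mat n n" and Mp: "\<And>x. br M (\<pi> x) = 0\<^sub>m n n" and Ma: "br M a = 0\<^sub>m n n"
  shows "Gd d X \<Longrightarrow> br M X = 0\<^sub>m n n"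
proof (induction rule: Gd.induct)
  case (gadd d X Y) then show ?case using M Gd_car[OF gadd.hyps(1)] Gd_car[OF gadd.hyps(2)]
    by (simp add: br_add_right[of _ n])
next
  case (gminus d X Y) then show ?case using M Gd_car[OF gminus.hyps(1)] Gd_car[OF gminus.hyps(2)]
    by (simp add: br_minus_right[of _ n])
next
  case (gsmult d X c) then show ?case using M Gd_car[OF gsmult.hyps(1)]
    by (simp add: br_smult_right[of _ n])
next
  case (gbr i X j Y) then show ?case using M Gd_car[OF gbr.hyps(1)] Gd_car[OF gbr.hyps(2)]
    by (simp add: jacobi[of M n])
qed (use M Mp Ma in auto)

lemma Gd_trace:
  assumes M: "M \<in> carrier_mat n n" and Mc: "\<And>d X. Gd d X \<Longrightarrow> M * X = X * M"
  shows "Gd d X \<Longrightarrow> d = 0 \<Longrightarrow> mtr (M * X) = 0"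
proof (induction rule: Gd.induct)
  case (g0 d) then show ?case using M by (simp add: mtr_def)
next
  case (gadd d X Y) then show ?case using M Gd_car[OF gadd.hyps(1)] Gd_car[OF gadd.hyps(2)]
    by (simp add: md4[of _ n] mtr_add[of _ n])
next
  case (gminus d X Y) then show ?case using M Gd_car[OF gminus.hyps(1)] Gd_car[OF gminus.hyps(2)]
    by (simp add: md2[of _ n] mtr_minus[of _ n])
next
  case (gsmult d X c) then show ?case using M Gd_car[OF gsmult.hyps(1)]
    by (simp add: md5[of _ n] mtr_smult[of _ n])
next
  case (gbr i X j Y)
  note X = Gd_car[OF gbr.hyps(1)] and Y = Gd_car[OF gbr.hyps(2)]
  have MX: "M * X = X * M" using Mc gbr.hyps(1) by blast
  have "mtr (M * br X Y) = mtr (M * X * Y) - mtr (M * Y * X)"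
    using M X Y by (simp add: br_def md2[of _ n] mtr_minus[of _ n] md7[of _ n])
  also have "mtr (M * X * Y) = mtr (X * (M * Y))" using MX M X Y by (simp add: md7[of _ n])
  also have "\<dots> = mtr (M * Y * X)" using mtr_comm[of X n n "M * Y"] M X Y by simp
  finally show ?case by simp
qed auto

lemma central:
  assumes W: "Gd 0 W" and Wp: "\<And>x. br W (\<pi> x) = 0\<^sub>m n n" and Wa: "br W a = 0\<^sub>m n n"
  shows "W = 0\<^sub>m n n"
proof -
  note Wc = Gd_car[OF W]
  have Wcomm: "W * X = X * W" if "Gd d X" for d X
    using Gd_commutes[OF Wc Wp Wa that] Wc Gd_car[OF that] by (simp add: br_def ent_eq_iff[of _ n])
  define K where "K = {v \<in> carrier_vec n. W *\<^sub>v v = 0\<^sub>v n}"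
  have sub: "subspace_vec n K" unfolding subspace_vec_def K_def
    using Wc by (auto simp: mult_add_distrib_mat_vec[of _ n n] mult_mat_vec[of _ n n])
  have inv: "\<forall>M\<in>insert a (range \<pi>). \<forall>w\<in>K. M *\<^sub>v w \<in> K"
  proof (intro ballI)
    fix M w assume M: "M \<in> insert a (range \<pi>)" and w: "w \<in> K"
    have GM: "\<exists>d. Gd d M" using M g1 g2 by auto
    have Mc: "M \<in> carrier_mat n n" using M by auto
    have "W *\<^sub>v (M *\<^sub>v w) = (W * M) *\<^sub>v w" using Wc Mc w unfolding K_def by (simp add: assoc_mult_mat_vec)
    also have "\<dots> = (M * W) *\<^sub>v w" using Wcomm GM by auto
    also have "\<dots> = M *\<^sub>v (W *\<^sub>v w)" using Wc Mc w unfolding K_def by (simp add: assoc_mult_mat_vec)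
    also have "\<dots> = 0\<^sub>v n" using w Mc mult_zero_vec' unfolding K_def by simp
    finally show "M *\<^sub>v w \<in> K" using w Mc unfolding K_def by simp
  qed
  have "K = {0\<^sub>v n} \<or> K = carrier_vec n" using Irr sub inv unfolding irreducible_family_def by blast
  then show ?thesis
  proof
    assume K0: "K = {0\<^sub>v n}"
    have "det W \<noteq> 0"
    proof
      assume "det W = 0"
      then obtain v where "v \<in> carrier_vec n" "v \<noteq> 0\<^sub>v n" "W *\<^sub>v v = 0\<^sub>v n"
        using det_0_iff_vec_prod_zero_field[OF Wc] by blast
      then have "v \<in> K" unfolding K_def by simp
      with K0 \<open>v \<noteq> 0\<^sub>v n\<close> show False by simp
    qed
    then have "W \<in> Units (ring_mat TYPE('k) n ())" by (rule det_non_zero_imp_unit[OF Wc])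
    then obtain B where B: "B \<in> carrier_mat n n" "B * W = 1\<^sub>m n" "W * B = 1\<^sub>m n"
      unfolding Units_def ring_mat_def by auto
    have Bc: "B * X = X * B" if "Gd d X" for d X
    proof -
      note Xc = Gd_car[OF that]
      have "B * X = B * (X * (W * B))" using B Xc by simp
      also have "\<dots> = B * (W * X) * B" using Wcomm[OF that] B Xc Wc by (simp add: md7[of _ n])
      also have "\<dots> = X * B" using B Xc Wc by (simp add: md7[of _ n, symmetric])
      finally show ?thesis .
    qed
    have "mtr (B * W) = 0" using Gd_trace[OF B(1) Bc W] by simp
    moreover have "mtr (B * W) = of_nat n" using B(2) mtr_one by simp
    ultimately show ?thesis using npos by simp
  next
    assume K1: "K = carrier_vec n"
    show ?thesis
    proof (rule eq_matI)
      fix i j assume ij: "i < dim_row (0\<^sub>m n n :: 'k mat)" "j < dim_col (0\<^sub>m n n :: 'k mat)"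
      then have "unit_vec n j \<in> K" using K1 by simp
      then have "W *\<^sub>v unit_vec n j = 0\<^sub>v n" unfolding K_def by simp
      then have "(W *\<^sub>v unit_vec n j) $ i = 0" using ij by simp
      then show "W $$ (i,j) = 0\<^sub>m n n $$ (i,j)" using ij Wc by simp
    qed (use Wc in auto)
  qed
qed

lemma lowest:
  assumes Y: "Y \<in> carrier_mat n n" and EY: "br (\<pi> e) Y = 0\<^sub>m n n"
    and hY: "br h Y = - (of_nat p) \<cdot>\<^sub>m Y" and p: "p > 0"
  shows "Y = 0\<^sub>m n n"
  by (rule sl2_lowest[OF pi_car a_car Y h_def h_pi h_a EY hY p])

lemma highest:
  assumes Y: "Y \<in> carrier_mat n n" and aY: "br a Y = 0\<^sub>m n n"
    and hY: "br h Y = (of_nat p) \<cdot>\<^sub>m Y" and p: "p > 0"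
  shows "Y = 0\<^sub>m n n"
proof (rule sl2_lowest[OF a_car pi_car Y refl _ _ aY _ p])
  have hh: "br a (\<pi> e) = - h" using br_antisym[of "\<pi> e" n a] by (simp add: h_def)
  show "br (br a (\<pi> e)) a = a" unfolding hh using h_a by (simp add: br_uminus_left[of _ n])
  show "br (br a (\<pi> e)) (\<pi> e) = - \<pi> e" unfolding hh using h_pi by (simp add: br_uminus_left[of _ n])
  show "br (br a (\<pi> e)) Y = - of_nat p \<cdot>\<^sub>m Y" unfolding hh using hY Y
    by (simp add: br_uminus_left[of _ n] ent_eq_iff[of _ n] fun_eq_iff)
qed

end

context grep_ctx begin

lemma Gd_uminus: "Gd d X \<Longrightarrow> Gd d (- X)"
proof -
  assume X: "Gd d X"
  have "- X = 0\<^sub>m n n - X" using Gd_car[OF X] by (simp add: ent_eq_iff[of _ n])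
  then show ?thesis using gminus[OF g0 X] by simp
qed

lemma minus_self_mat: "(X::'k mat) \<in> carrier_mat n n \<Longrightarrow> X - X = 0\<^sub>m n n"
  by (rule eq_matI) auto

lemma uminus_zero_mat'[simp]: "- (0\<^sub>m n n :: 'k mat) = 0\<^sub>m n n"
  by (rule eq_matI) auto

lemma br_pi_D: "br (\<pi> y) (D x) = - \<pi> (m x y)"
  using br_antisym[of "D x" n "\<pi> y"] D_pi by simp

lemma piE_D: "br (\<pi> e) (D x) = - \<pi> x"
  using br_pi_D[of e x] by (simp add: munit2)

lemma D_h: "br (D x) h = 0\<^sub>m n n"
  using br_antisym[of h n "D x"] Gd0_h[OF Gd_D] by simp

lemma pi_comm: "br (\<pi> x) (\<pi> y) = 0\<^sub>m n n"
proof (rule highest[of _ 2])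
  show "br (\<pi> x) (\<pi> y) \<in> carrier_mat n n" by simp
  have ax: "br a (\<pi> x) = - D x" using br_antisym[of "\<pi> x" n a] by (simp add: D_def)
  have ay: "br a (\<pi> y) = - D y" using br_antisym[of "\<pi> y" n a] by (simp add: D_def)
  have "br a (br (\<pi> x) (\<pi> y)) = br (br a (\<pi> x)) (\<pi> y) + br (\<pi> x) (br a (\<pi> y))"
    by (rule jacobi[of _ n]) simp_all
  also have "\<dots> = - \<pi> (m x y) + \<pi> (m y x)"
    unfolding ax ay using br_pi_D[of x y] D_pi[of x y]
    by (simp add: br_uminus_left[of _ n] br_uminus_right[of _ n])
  also have "\<dots> = 0\<^sub>m n n" by (simp add: mcom[of y x] ent_eq_iff[of _ n])
  finally show "br a (br (\<pi> x) (\<pi> y)) = 0\<^sub>m n n" .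
  have "Gd 2 (br (\<pi> x) (\<pi> y))" by (rule gbr'[OF g1 g1]) simp
  then show "br h (br (\<pi> x) (\<pi> y)) = of_nat 2 \<cdot>\<^sub>m br (\<pi> x) (\<pi> y)"
    using Gd_wt by fastforce
qed simp

definition rep0 where "rep0 Z S \<longleftrightarrow> Gd 0 Z \<and> (\<forall>u. br Z (\<pi> u) = \<pi> (S u))"
definition rep1 where "rep1 Q B \<longleftrightarrow> Gd (-1) Q \<and> (\<forall>u. rep0 (br Q (\<pi> u)) (B u))"

lemma lowest_Gdm1:
  assumes Q: "Gd (-1) Q" and EQ: "br (\<pi> e) Q = 0\<^sub>m n n"
  shows "Q = 0\<^sub>m n n"
proof (rule lowest[OF Gd_car[OF Q] EQ _ ])
  show "br h Q = - of_nat 1 \<cdot>\<^sub>m Q" using Gd_wt[OF Q] by simp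
qed simp

lemma lowest_Gdm2:
  assumes Q: "Gd (-2) Q" and EQ: "br (\<pi> e) Q = 0\<^sub>m n n"
  shows "Q = 0\<^sub>m n n"
proof (rule lowest[OF Gd_car[OF Q] EQ _ ])
  show "br h Q = - of_nat 2 \<cdot>\<^sub>m Q" using Gd_wt[OF Q] by simp
qed simp

lemma rep0_unique:
  assumes Z: "rep0 Z S" and Z': "rep0 Z' S"
  shows "Z = Z'"
proof -
  have GZ: "Gd 0 Z" and GZ': "Gd 0 Z'" using Z Z' unfolding rep0_def by auto
  note Zc = Gd_car[OF GZ] and Zc' = Gd_car[OF GZ']
  define W where "W = Z - Z'"
  have GW: "Gd 0 W" unfolding W_def by (rule gminus[OF GZ GZ'])
  note Wc = Gd_car[OF GW]
  have Wp: "br W (\<pi> u) = 0\<^sub>m n n" for u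
    using Z Z' Zc Zc' unfolding W_def rep0_def by (simp add: br_minus_left[of _ n] minus_self_mat)
  have Wpe: "br (\<pi> e) W = 0\<^sub>m n n" using br_antisym[of W n "\<pi> e"] Wp[of e] Wc by simp
  define Q where "Q = br W a"
  have GQ: "Gd (-1) Q" unfolding Q_def by (rule gbr'[OF GW g2]) simp
  have "br (\<pi> e) Q = br (br (\<pi> e) W) a + br W (br (\<pi> e) a)"
    unfolding Q_def by (rule jacobi[of _ n]) (use Wc in simp_all)
  also have "\<dots> = 0\<^sub>m n n" unfolding Wpe h_def[symmetric]
    using br_antisym[of h n W] Gd0_h[OF GW] Wc by simp
  finally have "Q = 0\<^sub>m n n" using lowest_Gdm1[OF GQ] by blast
  then have "W = 0\<^sub>m n n" using central[OF GW Wp] unfolding Q_def by blast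
  then show ?thesis unfolding W_def using Zc Zc'
    by (simp add: ent_eq_iff[of _ n])
qed

lemma rep1_unique:
  assumes Q: "rep1 Q B" and Q': "rep1 Q' B"
  shows "Q = Q'"
proof -
  have GQ: "Gd (-1) Q" and GQ': "Gd (-1) Q'" using Q Q' unfolding rep1_def by auto
  note Qc = Gd_car[OF GQ] and Qc' = Gd_car[OF GQ']
  define W where "W = Q - Q'"
  have GW: "Gd (-1) W" unfolding W_def by (rule gminus[OF GQ GQ'])
  note Wc = Gd_car[OF GW]
  have "br Q (\<pi> u) = br Q' (\<pi> u)" for u
    using Q Q' unfolding rep1_def by (blast intro: rep0_unique)
  then have Wp: "br W (\<pi> u) = 0\<^sub>m n n" for u
    using Qc Qc' unfolding W_def by (simp add: br_minus_left[of _ n] minus_self_mat)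
  have Wpe: "br (\<pi> e) W = 0\<^sub>m n n" using br_antisym[of W n "\<pi> e"] Wp[of e] Wc by simp
  have "W = 0\<^sub>m n n" by (rule lowest_Gdm1[OF GW Wpe])
  then show ?thesis unfolding W_def using Qc Qc'
    by (simp add: ent_eq_iff[of _ n])
qed

lemma rep0_zero: "rep0 (0\<^sub>m n n) 0"
  unfolding rep0_def by (simp add: g0)

lemma rep0_add: "rep0 Z1 S1 \<Longrightarrow> rep0 Z2 S2 \<Longrightarrow> rep0 (Z1 + Z2) (\<lambda>x. S1 x + S2 x)"
  unfolding rep0_def using Gd_car
  by (auto intro: gadd simp: br_add_left[of _ n] pi_add pi_car)

lemma rep0_minus: "rep0 Z1 S1 \<Longrightarrow> rep0 Z2 S2 \<Longrightarrow> rep0 (Z1 - Z2) (\<lambda>x. S1 x - S2 x)"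
  unfolding rep0_def using Gd_car
  by (auto intro: gminus simp: br_minus_left[of _ n] pi_diff pi_car)

lemma rep0_scale: "rep0 Z S \<Longrightarrow> rep0 (c \<cdot>\<^sub>m Z) (\<lambda>x. sA c (S x))"
  unfolding rep0_def using Gd_car
  by (auto intro: gsmult simp: br_smult_left[of _ n] pi_scale pi_car)

lemma rep0_L: "rep0 (D x) (Lop m x)"
  unfolding rep0_def Lop_def by (simp add: Gd_D D_pi)

lemma rep0_br: "rep0 Z1 S1 \<Longrightarrow> rep0 Z2 S2 \<Longrightarrow> rep0 (br Z1 Z2) (\<lambda>y. S1 (S2 y) - S2 (S1 y))"
proof -
  assume r1: "rep0 Z1 S1" and r2: "rep0 Z2 S2"
  then have G1: "Gd 0 Z1" and G2: "Gd 0 Z2" unfolding rep0_def by auto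
  note c1 = Gd_car[OF G1] and c2 = Gd_car[OF G2]
  have "Gd 0 (br Z1 Z2)" by (rule gbr'[OF G1 G2]) simp
  moreover have "br (br Z1 Z2) (\<pi> u) = \<pi> (S1 (S2 u) - S2 (S1 u))" for u
  proof -
    have "br Z1 (br Z2 (\<pi> u)) = br (br Z1 Z2) (\<pi> u) + br Z2 (br Z1 (\<pi> u))"
      by (rule jacobi[of _ n]) (use c1 c2 in simp_all)
    then have "br (br Z1 Z2) (\<pi> u) = br Z1 (br Z2 (\<pi> u)) - br Z2 (br Z1 (\<pi> u))"
      using c1 c2 by (simp add: ent_eq_iff[of _ n] algebra_simps)
    also have "\<dots> = \<pi> (S1 (S2 u)) - \<pi> (S2 (S1 u))" using r1 r2 unfolding rep0_def by simp
    finally show ?thesis by (simp add: pi_diff)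
  qed
  ultimately show ?thesis unfolding rep0_def by blast
qed

lemma rep0_cong: "rep0 Z S \<Longrightarrow> (\<And>x. S x = T x) \<Longrightarrow> rep0 Z T"
  unfolding rep0_def by simp

lemma ex_rep0_base:
  assumes H: "x \<in> range (Lop m) \<union> {(\<lambda>y. Lop m u (Lop m v y) - Lop m v (Lop m u y)) | u v. True}"
  shows "\<exists>Z. rep0 Z x"
proof (rule UnE[OF H])
  assume "x \<in> range (Lop m)"
  then obtain u where "x = Lop m u" by blast
  then show ?thesis using rep0_L by blast
next
  assume "x \<in> {(\<lambda>y. Lop m u (Lop m v y) - Lop m v (Lop m u y)) | u v. True}"
  then obtain u v where x: "x = (\<lambda>y. Lop m u (Lop m v y) - Lop m v (Lop m u y))" by blast
  have "rep0 (br (D u) (D v)) (\<lambda>y. Lop m u (Lop m v y) - Lop m v (Lop m u y))"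
    by (rule rep0_br[OF rep0_L rep0_L])
  then show ?thesis unfolding x by (rule exI)
qed

lemma ex_rep0: "S \<in> U0 sA m \<Longrightarrow> \<exists>Z. rep0 Z S"
  unfolding U0_def
proof (induction rule: lspan.induct)
  case lspan_zero then show ?case using rep0_zero by blast
next
  case (lspan_base x)
  then show ?case by (rule ex_rep0_base)
next
  case (lspan_add x y)
  then obtain Z1 Z2 where "rep0 Z1 x" "rep0 Z2 y" by blast
  then have "rep0 (Z1 + Z2) (x + y)" using rep0_add[of Z1 x Z2 y] by (simp add: plus_fun_def)
  then show ?case by blast
next
  case (lspan_scale x c)
  then obtain Z where "rep0 Z x" by blast
  then show ?case using rep0_scale by blast
qed

end

context grep_ctx begin

lemma rep1_zero: "rep1 (0\<^sub>m n n) 0"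
  unfolding rep1_def using rep0_zero by (simp add: g0 zero_fun_def)

lemma rep1_add: "rep1 Q1 B1 \<Longrightarrow> rep1 Q2 B2 \<Longrightarrow> rep1 (Q1 + Q2) (B1 + B2)"
proof -
  assume r1: "rep1 Q1 B1" and r2: "rep1 Q2 B2"
  then have G1: "Gd (-1) Q1" and G2: "Gd (-1) Q2" unfolding rep1_def by auto
  have "rep0 (br (Q1 + Q2) (\<pi> u)) ((B1 + B2) u)" for u
  proof -
    have "rep0 (br Q1 (\<pi> u) + br Q2 (\<pi> u)) (\<lambda>x. B1 u x + B2 u x)"
      using r1 r2 unfolding rep1_def by (blast intro: rep0_add)
    then show ?thesis using Gd_car[OF G1] Gd_car[OF G2] by (simp add: br_add_left[of _ n] plus_fun_def)
  qed
  then show ?thesis unfolding rep1_def using gadd[OF G1 G2] by blast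
qed

lemma rep1_scale: "rep1 Q B \<Longrightarrow> rep1 (c \<cdot>\<^sub>m Q) (\<lambda>x y. sA c (B x y))"
proof -
  assume r: "rep1 Q B"
  then have G: "Gd (-1) Q" unfolding rep1_def by auto
  have "rep0 (br (c \<cdot>\<^sub>m Q) (\<pi> u)) (\<lambda>y. sA c (B u y))" for u
    using rep0_scale[of "br Q (\<pi> u)" "B u" c] r Gd_car[OF G] unfolding rep1_def
    by (simp add: br_smult_left[of _ n])
  then show ?thesis unfolding rep1_def using gsmult[OF G] by blast
qed

lemma rep1_Abar: "rep1 (- a) (Abar m)"
proof -
  have "br (- a) (\<pi> u) = D u" for u
    using br_antisym[of "\<pi> u" n a] by (simp add: br_uminus_left[of _ n] D_def)
  moreover have "Abar m u = Lop m u" for u by (simp add: Abar_def Lop_def)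
  ultimately show ?thesis unfolding rep1_def using Gd_uminus[OF g2] rep0_L by simp
qed

definition QA where "QA x = br (D x) a"

lemma QA_car[simp]: "QA x \<in> carrier_mat n n" by (simp add: QA_def)
lemma Gd_QA: "Gd (-1) (QA x)" unfolding QA_def by (rule gbr'[OF Gd_D g2]) simp

lemma a_pi: "br a (\<pi> z) = - D z"
  using br_antisym[of "\<pi> z" n a] by (simp add: D_def)

lemma QA_pi: "br (QA x) (\<pi> u) = D (m u x) + br (D u) (D x)"
proof -
  have j: "br (D x) (br a (\<pi> u)) = br (br (D x) a) (\<pi> u) + br a (br (D x) (\<pi> u))"
    by (rule jacobi[of _ n]) simp_all
  have "br (QA x) (\<pi> u) = br (D x) (br a (\<pi> u)) - br a (br (D x) (\<pi> u))"
    using j unfolding QA_def by (simp add: ent_eq_iff[of _ n] algebra_simps)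
  also have "\<dots> = - br (D x) (D u) + D (m x u)"
    unfolding a_pi D_pi by (simp add: br_uminus_right[of _ n] ent_eq_iff[of _ n])
  also have "\<dots> = D (m u x) + br (D u) (D x)"
    using br_antisym[of "D x" n "D u"] by (simp add: mcom[of x u] ent_eq_iff[of _ n] algebra_simps)
  finally show ?thesis .
qed

lemma rep1_Aop: "rep1 (QA x) (Aop m x)"
proof -
  have "rep0 (br (QA x) (\<pi> u)) (Aop m x u)" for u
  proof -
    have "rep0 (D (m u x) + br (D u) (D x)) (\<lambda>y. Lop m (m u x) y + (Lop m u (Lop m x y) - Lop m x (Lop m u y)))"
      by (rule rep0_add[OF rep0_L rep0_br[OF rep0_L rep0_L]])
    then show ?thesis unfolding QA_pi
      by (rule rep0_cong) (simp add: Aop_def Lop_def mcom[of "m y x" u for y] mcom[of y x for y] algebra_simps, rule mcom)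
  qed
  then show ?thesis unfolding rep1_def using Gd_QA by blast
qed

inductive Qsp :: "'k mat \<Rightarrow> bool" where
  qa: "Qsp a"
| qA: "Qsp (QA x)"
| q0: "Qsp (0\<^sub>m n n)"
| qadd: "Qsp X \<Longrightarrow> Qsp Y \<Longrightarrow> Qsp (X + Y)"
| qsmult: "Qsp X \<Longrightarrow> Qsp (c \<cdot>\<^sub>m X)"
| qum: "Qsp X \<Longrightarrow> Qsp (- X)"

lemma Qsp_Gd: "Qsp Q \<Longrightarrow> Gd (-1) Q"
  by (induction rule: Qsp.induct) (auto intro: g2 Gd_QA g0 gadd gsmult Gd_uminus)

lemma Qsp_car: "Qsp Q \<Longrightarrow> Q \<in> carrier_mat n n"
  using Qsp_Gd Gd_car by blast

lemma ex_rep1_base: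
  assumes H: "B \<in> {Abar m} \<union> range (Aop m)"
  shows "\<exists>Q. rep1 Q B \<and> Qsp Q"
proof (rule UnE[OF H])
  assume "B \<in> {Abar m}"
  then show ?thesis using rep1_Abar qum[OF qa] by blast
next
  assume "B \<in> range (Aop m)"
  then obtain x where "B = Aop m x" by blast
  then show ?thesis using rep1_Aop qA by blast
qed

lemma ex_rep1: "B \<in> U1 sA m \<Longrightarrow> \<exists>Q. rep1 Q B \<and> Qsp Q"
  unfolding U1_def
proof (induction rule: lspan.induct)
  case lspan_zero then show ?case using rep1_zero q0 by blast
next
  case (lspan_base x)
  then show ?case by (rule ex_rep1_base)
next
  case (lspan_add x y)
  then obtain Q1 Q2 where "rep1 Q1 x" "Qsp Q1" "rep1 Q2 y" "Qsp Q2" by blast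
  then show ?case using rep1_add qadd by blast
next
  case (lspan_scale x c)
  then obtain Q where "rep1 Q x" "Qsp Q" by blast
  then show ?case using rep1_scale qsmult by blast
qed

lemma piE_QA: "br (\<pi> e) (QA x) = - D x"
proof -
  have "br (\<pi> e) (QA x) = br (br (\<pi> e) (D x)) a + br (D x) (br (\<pi> e) a)"
    unfolding QA_def by (rule jacobi[of _ n]) simp_all
  also have "\<dots> = - D x" unfolding piE_D h_def[symmetric] D_h
    by (simp add: br_uminus_left[of _ n] D_def)
  finally show ?thesis .
qed

lemma R0: "br (br (D x) (D y)) a = 0\<^sub>m n n"
proof (rule lowest_Gdm1)
  show "Gd (-1) (br (br (D x) (D y)) a)" by (rule gbr'[OF gbr'[OF Gd_D Gd_D] g2]) simp_all
  have inner: "br (\<pi> e) (br (D x) (D y)) = 0\<^sub>m n n"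
  proof -
    have "br (\<pi> e) (br (D x) (D y)) = br (br (\<pi> e) (D x)) (D y) + br (D x) (br (\<pi> e) (D y))"
      by (rule jacobi[of _ n]) simp_all
    also have "\<dots> = - br (\<pi> x) (D y) - br (D x) (\<pi> y)"
      unfolding piE_D by (simp add: br_uminus_left[of _ n] br_uminus_right[of _ n] ent_eq_iff[of _ n])
    also have "\<dots> = 0\<^sub>m n n" unfolding br_pi_D D_pi
      by (simp add: mcom[of x y] ent_eq_iff[of _ n])
    finally show ?thesis .
  qed
  have GDD: "Gd 0 (br (D x) (D y))" by (rule gbr'[OF Gd_D Gd_D]) simp
  have "br (\<pi> e) (br (br (D x) (D y)) a) = br (br (\<pi> e) (br (D x) (D y))) a + br (br (D x) (D y)) (br (\<pi> e) a)"
    by (rule jacobi[of _ n]) simp_all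
  also have "\<dots> = 0\<^sub>m n n" unfolding inner h_def[symmetric]
    using br_antisym[of h n "br (D x) (D y)"] Gd0_h[OF GDD] by simp
  finally show "br (\<pi> e) (br (br (D x) (D y)) a) = 0\<^sub>m n n" .
qed

lemma br_a_QA: "br a (QA x) = 0\<^sub>m n n"
proof (rule lowest_Gdm2)
  show "Gd (-2) (br a (QA x))" by (rule gbr'[OF g2 Gd_QA]) simp
  have "br (\<pi> e) (br a (QA x)) = br (br (\<pi> e) a) (QA x) + br a (br (\<pi> e) (QA x))"
    by (rule jacobi[of _ n]) simp_all
  also have "\<dots> = 0\<^sub>m n n"
  proof -
    have "br h (QA x) = - QA x" using Gd_wt[OF Gd_QA] by (simp add: ent_eq_iff[of _ n] fun_eq_iff)
    moreover have "br a (- D x) = QA x"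
      using br_antisym[of "D x" n a] by (simp add: br_uminus_right[of _ n] QA_def)
    ultimately show ?thesis unfolding h_def[symmetric] piE_QA by (simp add: ent_eq_iff[of _ n])
  qed
  finally show "br (\<pi> e) (br a (QA x)) = 0\<^sub>m n n" .
qed

lemma br_QA_QA: "br (QA x) (QA y) = 0\<^sub>m n n"
proof (rule lowest_Gdm2)
  show "Gd (-2) (br (QA x) (QA y))" by (rule gbr'[OF Gd_QA Gd_QA]) simp
  have R: "br (D x) (QA y) - br (D y) (QA x) = 0\<^sub>m n n"
  proof -
    have "br (D x) (br (D y) a) = br (br (D x) (D y)) a + br (D y) (br (D x) a)"
      by (rule jacobi[of _ n]) simp_all
    then show ?thesis using R0[of x y] unfolding QA_def by (simp add: ent_eq_iff[of _ n])
  qed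
  have "br (\<pi> e) (br (QA x) (QA y)) = br (br (\<pi> e) (QA x)) (QA y) + br (QA x) (br (\<pi> e) (QA y))"
    by (rule jacobi[of _ n]) simp_all
  also have "\<dots> = - (br (D x) (QA y) - br (D y) (QA x))" unfolding piE_QA
    using br_antisym[of "D y" n "QA x"]
    by (simp add: br_uminus_left[of _ n] br_uminus_right[of _ n] ent_eq_iff[of _ n])
  also have "\<dots> = 0\<^sub>m n n" unfolding R by simp
  finally show "br (\<pi> e) (br (QA x) (QA y)) = 0\<^sub>m n n" .
qed

lemma Qsp_br_gen:
  assumes g: "g = a \<or> (\<exists>x. g = QA x)"
  shows "Qsp Q \<Longrightarrow> br g Q = 0\<^sub>m n n"
proof -
  have gc: "g \<in> carrier_mat n n" using g by auto
  have ga: "br g a = 0\<^sub>m n n"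
    using g br_a_QA br_antisym[of a n "QA _"] by auto
  have gA: "br g (QA y) = 0\<^sub>m n n" for y
    using g br_a_QA br_QA_QA by auto
  show "Qsp Q \<Longrightarrow> br g Q = 0\<^sub>m n n"
  proof (induction rule: Qsp.induct)
    case (qadd X Y) then show ?case using gc Qsp_car[OF qadd.hyps(1)] Qsp_car[OF qadd.hyps(2)]
      by (simp add: br_add_right[of _ n])
  next
    case (qsmult X c) then show ?case using gc Qsp_car[OF qsmult.hyps(1)]
      by (simp add: br_smult_right[of _ n])
  next
    case (qum X) then show ?case using gc Qsp_car[OF qum.hyps(1)]
      by (simp add: br_uminus_right[of _ n])
  qed (use ga gA gc in auto)
qed

lemma Qsp_br: "Qsp Q1 \<Longrightarrow> Qsp Q2 \<Longrightarrow> br Q1 Q2 = 0\<^sub>m n n"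
proof (induction rule: Qsp.induct)
  case qa then show ?case using Qsp_br_gen by blast
next
  case (qA x) then show ?case using Qsp_br_gen by blast
next
  case q0 then show ?case using Qsp_car by simp
next
  case (qadd X Y) then show ?case using Qsp_car[OF qadd.hyps(1)] Qsp_car[OF qadd.hyps(2)] Qsp_car[OF qadd.prems]
    by (simp add: br_add_left[of _ n])
next
  case (qsmult X c) then show ?case using Qsp_car[OF qsmult.hyps(1)] Qsp_car[OF qsmult.prems]
    by (simp add: br_smult_left[of _ n])
next
  case (qum X) then show ?case using Qsp_car[OF qum.hyps(1)] Qsp_car[OF qum.prems]
    by (simp add: br_uminus_left[of _ n])
qed

end

context grep_ctx begin

lemma rep1_minus: "rep1 Q1 B1 \<Longrightarrow> rep1 Q2 B2 \<Longrightarrow> rep1 (Q1 - Q2) (\<lambda>x y. B1 x y - B2 x y)"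
proof -
  assume r1: "rep1 Q1 B1" and r2: "rep1 Q2 B2"
  then have G1: "Gd (-1) Q1" and G2: "Gd (-1) Q2" unfolding rep1_def by auto
  have "rep0 (br (Q1 - Q2) (\<pi> u)) (\<lambda>y. B1 u y - B2 u y)" for u
  proof -
    have "rep0 (br Q1 (\<pi> u) - br Q2 (\<pi> u)) (\<lambda>x. B1 u x - B2 u x)"
      using r1 r2 unfolding rep1_def by (blast intro: rep0_minus)
    then show ?thesis using Gd_car[OF G1] Gd_car[OF G2] by (simp add: br_minus_left[of _ n])
  qed
  then show ?thesis unfolding rep1_def using gminus[OF G1 G2] by blast
qed

lemma rep1_cong: "rep1 Q B \<Longrightarrow> (\<And>x y. B x y = C x y) \<Longrightarrow> rep1 Q C"
proof -
  assume "rep1 Q B" "\<And>x y. B x y = C x y"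
  then have "B = C" by (simp add: fun_eq_iff)
  with \<open>rep1 Q B\<close> show ?thesis by simp
qed

lemma rep1_brZ:
  assumes rZ: "rep0 Z S" and rQ: "rep1 Q B"
  shows "rep1 (br Z Q) (\<lambda>x y. S (B x y) - B x (S y) - B (S x) y)"
proof -
  have GZ: "Gd 0 Z" using rZ unfolding rep0_def by auto
  have GQ: "Gd (-1) Q" using rQ unfolding rep1_def by auto
  note Zc = Gd_car[OF GZ] and Qc = Gd_car[OF GQ]
  have "rep0 (br (br Z Q) (\<pi> v)) (\<lambda>y. S (B v y) - B v (S y) - B (S v) y)" for v
  proof -
    have j: "br Z (br Q (\<pi> v)) = br (br Z Q) (\<pi> v) + br Q (br Z (\<pi> v))"
      by (rule jacobi[of _ n]) (use Zc Qc in simp_all)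
    have e: "br (br Z Q) (\<pi> v) = br Z (br Q (\<pi> v)) - br Q (\<pi> (S v))"
      using j rZ Zc Qc unfolding rep0_def by (simp add: ent_eq_iff[of _ n] algebra_simps)
    have "rep0 (br Z (br Q (\<pi> v)) - br Q (\<pi> (S v))) (\<lambda>y. (S (B v y) - B v (S y)) - B (S v) y)"
      using rep0_minus[OF rep0_br[OF rZ] ] rQ unfolding rep1_def by blast
    then show ?thesis unfolding e by simp
  qed
  moreover have "Gd (-1) (br Z Q)" by (rule gbr'[OF GZ GQ]) simp
  ultimately show ?thesis unfolding rep1_def by blast
qed

definition rho0 where "rho0 S = (THE Z. rep0 Z S)"
definition rho1 where "rho1 B = (THE Q. rep1 Q B)"
definition rho :: "'a LAel \<Rightarrow> 'k mat" where
  "rho X = (case X of (u, S, B) \<Rightarrow> \<pi> u + rho0 S + rho1 B)"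

lemma rho0_eq: "rep0 Z S \<Longrightarrow> rho0 S = Z"
  unfolding rho0_def using rep0_unique by blast
lemma rho1_eq: "rep1 Q B \<Longrightarrow> rho1 B = Q"
  unfolding rho1_def using rep1_unique by blast

lemma LA_data:
  assumes "X \<in> LA sA m"
  obtains u S B Z Q where "X = (u, S, B)" "rep0 Z S" "rep1 Q B" "Qsp Q" "S \<in> U0 sA m" "B \<in> U1 sA m"
    "rho X = \<pi> u + Z + Q"
proof -
  obtain u S B where X: "X = (u, S, B)" "S \<in> U0 sA m" "B \<in> U1 sA m"
    using assms unfolding LA_def by auto
  obtain Z where Z: "rep0 Z S" using ex_rep0[OF X(2)] by blast
  obtain Q where Q: "rep1 Q B" "Qsp Q" using ex_rep1[OF X(3)] by blast
  have "rho X = \<pi> u + Z + Q" unfolding X rho_def using rho0_eq[OF Z] rho1_eq[OF Q(1)] by simp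
  then show ?thesis using that X Z Q by blast
qed

lemma rep0_car: "rep0 Z S \<Longrightarrow> Z \<in> carrier_mat n n" unfolding rep0_def using Gd_car by blast
lemma rep1_car: "rep1 Q S \<Longrightarrow> Q \<in> carrier_mat n n" unfolding rep1_def using Gd_car by blast

lemma rho_car: "X \<in> LA sA m \<Longrightarrow> rho X \<in> carrier_mat n n"
  by (erule LA_data) (auto dest: rep0_car rep1_car)

lemma rho_add: "X \<in> LA sA m \<Longrightarrow> Y \<in> LA sA m \<Longrightarrow> rho (la_add X Y) = rho X + rho Y"
proof -
  assume X: "X \<in> LA sA m" and Y: "Y \<in> LA sA m"
  obtain u1 S1 B1 Z1 Q1 where x: "X = (u1, S1, B1)" "rep0 Z1 S1" "rep1 Q1 B1" "rho X = \<pi> u1 + Z1 + Q1"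
    using LA_data[OF X] by metis
  obtain u2 S2 B2 Z2 Q2 where y: "Y = (u2, S2, B2)" "rep0 Z2 S2" "rep1 Q2 B2" "rho Y = \<pi> u2 + Z2 + Q2"
    using LA_data[OF Y] by metis
  have r0: "rho0 (\<lambda>x. S1 x + S2 x) = Z1 + Z2" by (rule rho0_eq[OF rep0_add[OF x(2) y(2)]])
  have "B1 + B2 = (\<lambda>x y. B1 x y + B2 x y)" by (simp add: fun_eq_iff)
  then have r1: "rho1 (\<lambda>x y. B1 x y + B2 x y) = Q1 + Q2" using rho1_eq[OF rep1_add[OF x(3) y(3)]] by simp
  have c: "Z1 \<in> carrier_mat n n" "Z2 \<in> carrier_mat n n" "Q1 \<in> carrier_mat n n" "Q2 \<in> carrier_mat n n"
    using x y by (auto dest: rep0_car rep1_car)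
  show ?thesis unfolding x(1) y(1) la_add_def using rho0_eq[OF x(2)] rho1_eq[OF x(3)] rho0_eq[OF y(2)] rho1_eq[OF y(3)] r0 r1 c
    by (simp add: rho_def pi_add ent_eq_iff[of _ n] fun_eq_iff algebra_simps)
qed

lemma rho_scale: "X \<in> LA sA m \<Longrightarrow> rho (la_scale sA c X) = c \<cdot>\<^sub>m rho X"
proof -
  assume X: "X \<in> LA sA m"
  obtain u1 S1 B1 Z1 Q1 where x: "X = (u1, S1, B1)" "rep0 Z1 S1" "rep1 Q1 B1" "rho X = \<pi> u1 + Z1 + Q1"
    using LA_data[OF X] by metis
  have r0: "rho0 (\<lambda>x. sA c (S1 x)) = c \<cdot>\<^sub>m Z1" by (rule rho0_eq[OF rep0_scale[OF x(2)]])
  have r1: "rho1 (\<lambda>x y. sA c (B1 x y)) = c \<cdot>\<^sub>m Q1" by (rule rho1_eq[OF rep1_scale[OF x(3)]])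
  have c: "Z1 \<in> carrier_mat n n" "Q1 \<in> carrier_mat n n"
    using x by (auto dest: rep0_car rep1_car)
  show ?thesis unfolding x(1) la_scale_def using rho0_eq[OF x(2)] rho1_eq[OF x(3)] r0 r1 c
    by (simp add: rho_def pi_scale ent_eq_iff[of _ n] fun_eq_iff algebra_simps)
qed

lemma rho_bracket: "X \<in> LA sA m \<Longrightarrow> Y \<in> LA sA m \<Longrightarrow> rho (la_bracket X Y) = br (rho X) (rho Y)"
proof -
  assume X: "X \<in> LA sA m" and Y: "Y \<in> LA sA m"
  obtain u1 S1 B1 Z1 Q1 where x: "X = (u1, S1, B1)" "rep0 Z1 S1" "rep1 Q1 B1" "Qsp Q1" "rho X = \<pi> u1 + Z1 + Q1"
    using LA_data[OF X] by metis
  obtain u2 S2 B2 Z2 Q2 where y: "Y = (u2, S2, B2)" "rep0 Z2 S2" "rep1 Q2 B2" "Qsp Q2" "rho Y = \<pi> u2 + Z2 + Q2"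
    using LA_data[OF Y] by metis
  have c: "Z1 \<in> carrier_mat n n" "Z2 \<in> carrier_mat n n" "Q1 \<in> carrier_mat n n" "Q2 \<in> carrier_mat n n"
    using x y by (auto dest: rep0_car rep1_car)
  have q1: "rep0 (br Q1 (\<pi> u2)) (B1 u2)" using x(3) unfolding rep1_def by blast
  have q2: "rep0 (br Q2 (\<pi> u1)) (B2 u1)" using y(3) unfolding rep1_def by blast
  define S' where "S' = (\<lambda>y. S1 (S2 y) - S2 (S1 y) + B1 u2 y - B2 u1 y)"
  define B' where "B' = (\<lambda>x y. (S1 (B2 x y) - B2 (S1 x) y - B2 x (S1 y)) - (S2 (B1 x y) - B1 (S2 x) y - B1 x (S2 y)))"
  have lb: "la_bracket X Y = (S1 u2 - S2 u1, S', B')"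
    unfolding x(1) y(1) la_bracket_def S'_def B'_def by simp
  have rS: "rep0 (br Z1 Z2 + br Q1 (\<pi> u2) - br Q2 (\<pi> u1)) S'"
    unfolding S'_def by (rule rep0_minus[OF rep0_add[OF rep0_br[OF x(2) y(2)] q1] q2])
  have rB: "rep1 (br Z1 Q2 - br Z2 Q1) B'"
    by (rule rep1_cong[OF rep1_minus[OF rep1_brZ[OF x(2) y(3)] rep1_brZ[OF y(2) x(3)]]])
       (simp add: B'_def algebra_simps)
  have lhs: "rho (la_bracket X Y) = (br Z1 (\<pi> u2) - br Z2 (\<pi> u1)) + (br Z1 Z2 + br Q1 (\<pi> u2) - br Q2 (\<pi> u1))
        + (br Z1 Q2 - br Z2 Q1)"
    unfolding lb rho_def using rho0_eq[OF rS] rho1_eq[OF rB] x(2) y(2)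
    by (simp add: pi_diff rep0_def)
  have "br (rho X) (rho Y) = br (\<pi> u1) (\<pi> u2) + br (\<pi> u1) Z2 + br (\<pi> u1) Q2 + br Z1 (\<pi> u2) + br Z1 Z2
      + br Z1 Q2 + br Q1 (\<pi> u2) + br Q1 Z2 + br Q1 Q2"
    unfolding x(5) y(5) using c
    by (simp add: br_add_left[of _ n] br_add_right[of _ n] ent_eq_iff[of _ n] fun_eq_iff algebra_simps)
  also have "\<dots> = br Z1 (\<pi> u2) - br Z2 (\<pi> u1) - br Q2 (\<pi> u1) + br Z1 Z2 + br Z1 Q2
      + br Q1 (\<pi> u2) - br Z2 Q1"
  proof -
    have a1: "br (\<pi> u1) Z2 = - br Z2 (\<pi> u1)" using c br_antisym[of Z2 n "\<pi> u1"] by simp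
    have a2: "br (\<pi> u1) Q2 = - br Q2 (\<pi> u1)" using c br_antisym[of Q2 n "\<pi> u1"] by simp
    have a3: "br Q1 Z2 = - br Z2 Q1" using c br_antisym[of Z2 n Q1] by simp
    show ?thesis unfolding a1 a2 a3 pi_comm Qsp_br[OF x(4) y(4)] using c
      by (simp add: ent_eq_iff[of _ n] fun_eq_iff algebra_simps)
  qed
  finally show ?thesis unfolding lhs using c
    by (simp add: ent_eq_iff[of _ n] fun_eq_iff algebra_simps)
qed

lemma rho_lie_rep: "lie_rep sA m n rho"
  unfolding lie_rep_def using rho_car rho_add rho_scale rho_bracket by (simp add: br_def)

lemma zero_U0: "(\<lambda>_. 0) \<in> U0 sA m"
proof -
  have "0 \<in> U0 sA m" unfolding U0_def by (rule lspan.lspan_zero)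
  then show ?thesis by (simp add: zero_fun_def)
qed
lemma zero_U1: "(\<lambda>_ _. 0) \<in> U1 sA m"
proof -
  have "0 \<in> U1 sA m" unfolding U1_def by (rule lspan.lspan_zero)
  then show ?thesis by (simp add: zero_fun_def)
qed
lemma Abar_U1: "Abar m \<in> U1 sA m"
  unfolding U1_def by (rule lspan.lspan_base) simp

lemma rho_pi: "rho (x, (\<lambda>_. 0), (\<lambda>_ _. 0)) = \<pi> x"
proof -
  have "rho0 (\<lambda>_. 0) = 0\<^sub>m n n" using rho0_eq[OF rep0_zero] by (simp add: zero_fun_def)
  moreover have "rho1 (\<lambda>_ _. 0) = 0\<^sub>m n n" using rho1_eq[OF rep1_zero] by (simp add: zero_fun_def)
  ultimately show ?thesis unfolding rho_def by simp
qed

lemma rho_Abar: "rho (0, (\<lambda>_. 0), Abar m) = - a"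
proof -
  have "rho0 (\<lambda>_. 0) = 0\<^sub>m n n" using rho0_eq[OF rep0_zero] by (simp add: zero_fun_def)
  moreover have "rho1 (Abar m) = - a" using rho1_eq[OF rep1_Abar] .
  ultimately show ?thesis unfolding rho_def by simp
qed

lemma rho_irr: "irreducible_family n (rho ` LA sA m)"
  unfolding irreducible_family_def
proof (intro conjI notI)
  show "n > 0" by (rule npos)
  assume "\<exists>W. subspace_vec n W \<and> W \<noteq> {0\<^sub>v n} \<and> W \<noteq> carrier_vec n \<and> (\<forall>M\<in>rho ` LA sA m. \<forall>w\<in>W. M *\<^sub>v w \<in> W)"
  then obtain W where W: "subspace_vec n W" "W \<noteq> {0\<^sub>v n}" "W \<noteq> carrier_vec n"
    and inv: "\<forall>M\<in>rho ` LA sA m. \<forall>w\<in>W. M *\<^sub>v w \<in> W" by blast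
  have pim: "(x, (\<lambda>_. 0), (\<lambda>_ _. 0)) \<in> LA sA m" for x unfolding LA_def using zero_U0 zero_U1 by simp
  have am: "(0, (\<lambda>_. 0), Abar m) \<in> LA sA m" unfolding LA_def using zero_U0 Abar_U1 by simp
  have "\<forall>M\<in>insert a (range \<pi>). \<forall>w\<in>W. M *\<^sub>v w \<in> W"
  proof (intro ballI)
    fix M w assume M: "M \<in> insert a (range \<pi>)" and w: "w \<in> W"
    have wc: "w \<in> carrier_vec n" using W(1) w unfolding subspace_vec_def by blast
    show "M *\<^sub>v w \<in> W"
    proof (cases "M = a")
      case True
      have "rho (0, (\<lambda>_. 0), Abar m) *\<^sub>v w \<in> W" using inv am w by blast
      then have "(- a) *\<^sub>v w \<in> W" unfolding rho_Abar .
      then have "(-1) \<cdot>\<^sub>v ((- a) *\<^sub>v w) \<in> W" using W(1) unfolding subspace_vec_def by blast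
      moreover have "(-1) \<cdot>\<^sub>v ((- a) *\<^sub>v w) = a *\<^sub>v w"
      proof -
        have "(- a) *\<^sub>v w = - (a *\<^sub>v w)" using wc a_car by (intro uminus_mult_mat_vec) (metis carrier_matD(2) carrier_vecD)
        then show ?thesis by (intro eq_vecI) auto
      qed
      ultimately show ?thesis using True by simp
    next
      case False
      then obtain x where "M = \<pi> x" using M by blast
      then show ?thesis using inv pim w rho_pi by (metis image_eqI)
    qed
  qed
  then have ex: "\<exists>W. subspace_vec n W \<and> W \<noteq> {0\<^sub>v n} \<and> W \<noteq> carrier_vec n \<and> (\<forall>M\<in>insert a (range \<pi>). \<forall>w\<in>W. M *\<^sub>v w \<in> W)"
    using W by (intro exI[of _ W]) simp
  have "\<not> (\<exists>W. subspace_vec n W \<and> W \<noteq> {0\<^sub>v n} \<and> W \<noteq> carrier_vec n \<and> (\<forall>M\<in>insert a (range \<pi>). \<forall>w\<in>W. M *\<^sub>v w \<in> W))"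
    using Irr unfolding irreducible_family_def by (rule conjunct2)
  then show False using ex by (rule notE)
qed

lemma one_invertible: "invertible_mat (1\<^sub>m n :: 'k mat)"
proof -
  have o: "(1\<^sub>m n :: 'k mat) * 1\<^sub>m n = 1\<^sub>m n" by (rule left_mult_one_mat[OF one_carrier_mat])
  have "dim_row (1\<^sub>m n :: 'k mat) = n" "dim_col (1\<^sub>m n :: 'k mat) = n" by simp_all
  then show ?thesis unfolding invertible_mat_def inverts_mat_def using o
    by (simp only: square_mat.simps) (intro conjI exI[of _ "1\<^sub>m n"]; simp)
qed

lemma part3_local: "\<exists>\<rho>. irreducible_lie_rep sA m n \<rho> \<and> gen_rep_equiv n (Phi_pi m \<rho>) (Phi_a m \<rho>) n \<pi> a"
proof (intro exI conjI)
  show "irreducible_lie_rep sA m n rho" unfolding irreducible_lie_rep_def using rho_lie_rep rho_irr by blast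
  have pp: "Phi_pi m rho = \<pi>" by (simp add: Phi_pi_def rho_pi fun_eq_iff)
  have pa: "Phi_a m rho = a" by (simp add: Phi_a_def rho_Abar)
  have h1: "1\<^sub>m n * \<pi> x = \<pi> x * 1\<^sub>m n" for x
    using left_mult_one_mat[OF pi_car] right_mult_one_mat[OF pi_car] by simp
  have h2: "1\<^sub>m n * a = a * 1\<^sub>m n"
    using left_mult_one_mat[OF a_car] right_mult_one_mat[OF a_car] by simp
  show "gen_rep_equiv n (Phi_pi m rho) (Phi_a m rho) n \<pi> a"
    unfolding gen_rep_equiv_def pp pa using one_invertible h1 h2 one_carrier_mat by blast
qed

end

locale jalg =
  fixes sA :: "'k::field_char_0 \<Rightarrow> 'a::ab_group_add \<Rightarrow> 'a"
    and m :: "'a \<Rightarrow> 'a \<Rightarrow> 'a" and e :: 'a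
  assumes J: "jordan_algebra_with_unit sA m e"
begin

lemma VS: "vector_space sA" using J unfolding jordan_algebra_with_unit_def by blast
interpretation V: vector_space sA by (rule VS)

lemma madd: "m (x + y) z = m x z + m y z" using J unfolding jordan_algebra_with_unit_def by blast
lemma mcom: "m x y = m y x" using J unfolding jordan_algebra_with_unit_def by blast
lemma munit: "m e x = x" using J unfolding jordan_algebra_with_unit_def by blast
lemma mzero[simp]: "m 0 y = 0" "m y 0 = 0"
proof -
  have "m 0 y = m 0 y + m 0 y" using madd[of 0 0 y] by simp
  then show "m 0 y = 0" by simp
  then show "m y 0 = 0" using mcom by metis
qed
lemma mneg: "m (- x) y = - m x y"
proof -
  have "0 = m (- x + x) y" by simp
  also have "\<dots> = m (- x) y + m x y" by (rule madd)
  finally show ?thesis by (simp add: eq_neg_iff_add_eq_0)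
qed
lemma mneg2: "m y (- x) = - m y x" using mneg mcom by metis
lemma scale0: "sA c 0 = 0" by simp
lemma scale_m1: "sA (-1) x = - x" by (simp add: V.scale_minus_left)

lemma zero_U0: "(\<lambda>_. 0) \<in> U0 sA m"
proof -
  have "0 \<in> U0 sA m" unfolding U0_def by (rule lspan.lspan_zero)
  then show ?thesis by (simp add: zero_fun_def)
qed
lemma zero_U1: "(\<lambda>_ _. 0) \<in> U1 sA m"
proof -
  have "0 \<in> U1 sA m" unfolding U1_def by (rule lspan.lspan_zero)
  then show ?thesis by (simp add: zero_fun_def)
qed
lemma Abar_U1: "Abar m \<in> U1 sA m"
  unfolding U1_def by (rule lspan.lspan_base) simp

lemma mem_LA: "S \<in> U0 sA m \<Longrightarrow> B \<in> U1 sA m \<Longrightarrow> (u, S, B) \<in> LA sA m"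
  unfolding LA_def by simp

lemma br_L: "la_bracket (0, (\<lambda>_. 0), Abar m) (x, (\<lambda>_. 0), (\<lambda>_ _. 0)) = (0, Lop m x, (\<lambda>_ _. 0))"
  by (simp add: la_bracket_def Abar_def Lop_def fun_eq_iff)

lemma br_LL: "la_bracket (0, Lop m u, (\<lambda>_ _. 0)) (0, Lop m v, (\<lambda>_ _. 0)) =
   (0, (\<lambda>x. Lop m u (Lop m v x) - Lop m v (Lop m u x)), (\<lambda>_ _. 0))"
  by (simp add: la_bracket_def Lop_def fun_eq_iff)

lemma br_A: "la_bracket (0, (\<lambda>_. 0), Abar m) (0, Lop m x, (\<lambda>_ _. 0)) = (0, (\<lambda>_. 0), Aop m x)"
  by (simp add: la_bracket_def Abar_def Lop_def Aop_def fun_eq_iff mcom[of x] mcom[of _ "m x _"] algebra_simps) (metis mcom)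

lemma LA_induct:
  assumes X: "X \<in> LA sA m"
    and Pu: "\<And>x. P (x, (\<lambda>_. 0), (\<lambda>_ _. 0))"
    and Pa: "P (0, (\<lambda>_. 0), Abar m)"
    and Padd: "\<And>X Y. X \<in> LA sA m \<Longrightarrow> Y \<in> LA sA m \<Longrightarrow> P X \<Longrightarrow> P Y \<Longrightarrow> P (la_add X Y)"
    and Pscale: "\<And>c X. X \<in> LA sA m \<Longrightarrow> P X \<Longrightarrow> P (la_scale sA c X)"
    and Pbr: "\<And>X Y. X \<in> LA sA m \<Longrightarrow> Y \<in> LA sA m \<Longrightarrow> P X \<Longrightarrow> P Y \<Longrightarrow> P (la_bracket X Y)"
  shows "P X"
proof -
  have LU: "(x, (\<lambda>_. 0), (\<lambda>_ _. 0)) \<in> LA sA m" for x by (rule mem_LA[OF zero_U0 zero_U1])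
  have LAb: "(0, (\<lambda>_. 0), Abar m) \<in> LA sA m" by (rule mem_LA[OF zero_U0 Abar_U1])
  have A0: "S \<in> U0 sA m \<Longrightarrow> P (0, S, (\<lambda>_ _. 0))" for S
  proof -
    assume "S \<in> U0 sA m"
    then have "S \<in> U0 sA m \<and> P (0, S, (\<lambda>_ _. 0))" unfolding U0_def
    proof (induction rule: lspan.induct)
      case lspan_zero then show ?case using Pu[of 0] zero_U0 unfolding U0_def by (simp add: zero_fun_def)
    next
      case (lspan_base x)
      have xU: "x \<in> U0 sA m" unfolding U0_def using lspan_base by (rule lspan.lspan_base)
      from lspan_base have "P (0, x, (\<lambda>_ _. 0))"
      proof (rule UnE)
        assume "x \<in> range (Lop m)"
        then obtain u where x: "x = Lop m u" by blast
        show ?thesis unfolding x using Pbr[OF LAb LU Pa Pu] br_L by simp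
      next
        assume "x \<in> {\<lambda>x. Lop m a (Lop m b x) - Lop m b (Lop m a x) |a b. True}"
        then obtain u v where x: "x = (\<lambda>y. Lop m u (Lop m v y) - Lop m v (Lop m u y))" by blast
        have Lu: "(0, Lop m u, (\<lambda>_ _. 0)) \<in> LA sA m" "(0, Lop m v, (\<lambda>_ _. 0)) \<in> LA sA m"
          using br_L[of u] br_L[of v] unfolding LA_def U0_def
          by (auto intro: lspan.lspan_base simp: zero_U1)
        have Pu': "P (0, Lop m w, (\<lambda>_ _. 0))" for w using Pbr[OF LAb LU Pa Pu] br_L by simp
        show ?thesis unfolding x using Pbr[OF Lu Pu' Pu'] br_LL by simp
      qed
      with xU show ?case unfolding U0_def by simp
    next
      case (lspan_add x y)
      have "la_add (0, x, (\<lambda>_ _. 0)) (0, y, (\<lambda>_ _. 0)) = (0, x + y, (\<lambda>_ _. 0))"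
        by (simp add: la_add_def fun_eq_iff)
      moreover have "(0, x, (\<lambda>_ _. 0)) \<in> LA sA m" "(0, y, (\<lambda>_ _. 0)) \<in> LA sA m"
        using lspan_add by (auto intro: mem_LA zero_U1 simp: U0_def)
      ultimately have "P (0, x + y, (\<lambda>_ _. 0))" using Padd[of "(0, x, (\<lambda>_ _. 0))" "(0, y, (\<lambda>_ _. 0))"] lspan_add.IH by simp
      then show ?case using lspan.lspan_add[of x _ _ y] lspan_add.IH by blast
    next
      case (lspan_scale x c)
      have "la_scale sA c (0, x, (\<lambda>_ _. 0)) = (0, (\<lambda>y. sA c (x y)), (\<lambda>_ _. 0))"
        by (simp add: la_scale_def fun_eq_iff)
      moreover have "(0, x, (\<lambda>_ _. 0)) \<in> LA sA m"
        using lspan_scale by (auto intro: mem_LA zero_U1 simp: U0_def)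
      ultimately have "P (0, (\<lambda>y. sA c (x y)), (\<lambda>_ _. 0))" using Pscale[of "(0, x, (\<lambda>_ _. 0))" c] lspan_scale.IH by simp
      then show ?case using lspan.lspan_scale[of x _ _ c] lspan_scale.IH by blast
    qed
    then show ?thesis by blast
  qed
  have A0m: "S \<in> U0 sA m \<Longrightarrow> (0, S, (\<lambda>_ _. 0)) \<in> LA sA m" for S by (rule mem_LA[OF _ zero_U1])
  have A1: "B \<in> U1 sA m \<Longrightarrow> P (0, (\<lambda>_. 0), B)" for B
  proof -
    assume "B \<in> U1 sA m"
    then have "B \<in> U1 sA m \<and> P (0, (\<lambda>_. 0), B)" unfolding U1_def
    proof (induction rule: lspan.induct)
      case lspan_zero then show ?case using Pu[of 0] zero_U1 unfolding U1_def by (simp add: zero_fun_def)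
    next
      case (lspan_base x)
      have xU: "x \<in> U1 sA m" unfolding U1_def using lspan_base by (rule lspan.lspan_base)
      from lspan_base have "P (0, (\<lambda>_. 0), x)"
      proof (rule UnE)
        assume "x \<in> {Abar m}"
        then show ?thesis using Pa by simp
      next
        assume "x \<in> range (Aop m)"
        then obtain u where x: "x = Aop m u" by blast
        have LL: "Lop m u \<in> U0 sA m" unfolding U0_def by (rule lspan.lspan_base) simp
        show ?thesis unfolding x using Pbr[OF LAb A0m[OF LL] Pa A0[OF LL]] br_A by simp
      qed
      with xU show ?case unfolding U1_def by simp
    next
      case (lspan_add x y)
      have "la_add (0, (\<lambda>_. 0), x) (0, (\<lambda>_. 0), y) = (0, (\<lambda>_. 0), x + y)"
        by (simp add: la_add_def fun_eq_iff)
      moreover have "(0, (\<lambda>_. 0), x) \<in> LA sA m" "(0, (\<lambda>_. 0), y) \<in> LA sA m"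
        using lspan_add by (auto intro: mem_LA zero_U0 simp: U1_def)
      ultimately have "P (0, (\<lambda>_. 0), x + y)" using Padd[of "(0, (\<lambda>_. 0), x)" "(0, (\<lambda>_. 0), y)"] lspan_add.IH by simp
      then show ?case using lspan.lspan_add[of x _ _ y] lspan_add.IH by blast
    next
      case (lspan_scale x c)
      have "la_scale sA c (0, (\<lambda>_. 0), x) = (0, (\<lambda>_. 0), (\<lambda>y z. sA c (x y z)))"
        by (simp add: la_scale_def fun_eq_iff)
      moreover have "(0, (\<lambda>_. 0), x) \<in> LA sA m"
        using lspan_scale by (auto intro: mem_LA zero_U0 simp: U1_def)
      ultimately have "P (0, (\<lambda>_. 0), (\<lambda>y z. sA c (x y z)))" using Pscale[of "(0, (\<lambda>_. 0), x)" c] lspan_scale.IH by simp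
      then show ?case using lspan.lspan_scale[of x _ _ c] lspan_scale.IH by blast
    qed
    then show ?thesis by blast
  qed
  obtain u S B where Xd: "X = (u, S, B)" "S \<in> U0 sA m" "B \<in> U1 sA m" using X unfolding LA_def by auto
  have e1: "la_add (u, (\<lambda>_. 0), (\<lambda>_ _. 0)) (0, S, (\<lambda>_ _. 0)) = (u, S, (\<lambda>_ _. 0))"
    by (simp add: la_add_def fun_eq_iff)
  have e2: "la_add (u, S, (\<lambda>_ _. 0)) (0, (\<lambda>_. 0), B) = (u, S, B)"
    by (simp add: la_add_def fun_eq_iff)
  have P1: "P (u, S, (\<lambda>_ _. 0))" using Padd[OF LU[of u] A0m[OF Xd(2)] Pu[of u] A0[OF Xd(2)]] e1 by simp
  have m1: "(u, S, (\<lambda>_ _. 0)) \<in> LA sA m" by (rule mem_LA[OF Xd(2) zero_U1])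
  have m2: "(0, (\<lambda>_. 0), B) \<in> LA sA m" by (rule mem_LA[OF zero_U0 Xd(3)])
  show ?thesis using Padd[OF m1 m2 P1 A1[OF Xd(3)]] e2 Xd(1) by simp
qed

end

context jalg begin

interpretation V: vector_space sA by (rule VS)

lemma Lop_U0: "Lop m x \<in> U0 sA m" unfolding U0_def by (rule lspan.lspan_base) simp

lemma LU: "(x, (\<lambda>_. 0), (\<lambda>_ _. 0)) \<in> LA sA m" by (rule mem_LA[OF zero_U0 zero_U1])
lemma LAb: "(0, (\<lambda>_. 0), Abar m) \<in> LA sA m" by (rule mem_LA[OF zero_U0 Abar_U1])
lemma LL: "(0, Lop m x, (\<lambda>_ _. 0)) \<in> LA sA m" by (rule mem_LA[OF Lop_U0 zero_U1])

lemma smult_mat_vec': "(A::'k mat) \<in> carrier_mat n n \<Longrightarrow> w \<in> carrier_vec n \<Longrightarrow> (c \<cdot>\<^sub>m A) *\<^sub>v w = c \<cdot>\<^sub>v (A *\<^sub>v w)"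
  by (intro eq_vecI) (auto simp: scalar_prod_def sum_distrib_left mult.assoc)

lemma sub_minus: "subspace_vec n W \<Longrightarrow> v \<in> W \<Longrightarrow> w \<in> W \<Longrightarrow> v - w \<in> W"
proof -
  assume W: "subspace_vec n W" and v: "v \<in> W" and w: "w \<in> W"
  have vc: "v \<in> carrier_vec n" and wc: "w \<in> carrier_vec n" using W v w unfolding subspace_vec_def by auto
  have "v + (-1) \<cdot>\<^sub>v w \<in> W" using W v w unfolding subspace_vec_def by blast
  moreover have "v + (-1) \<cdot>\<^sub>v w = v - w" using vc wc by (intro eq_vecI) auto
  ultimately show ?thesis by simp
qed

lemma lie_rep_props:
  assumes "lie_rep sA m n \<rho>"
  shows "\<And>X. X \<in> LA sA m \<Longrightarrow> \<rho> X \<in> carrier_mat n n"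
    and "\<And>X Y. X \<in> LA sA m \<Longrightarrow> Y \<in> LA sA m \<Longrightarrow> \<rho> (la_add X Y) = \<rho> X + \<rho> Y"
    and "\<And>c X. X \<in> LA sA m \<Longrightarrow> \<rho> (la_scale sA c X) = c \<cdot>\<^sub>m \<rho> X"
    and "\<And>X Y. X \<in> LA sA m \<Longrightarrow> Y \<in> LA sA m \<Longrightarrow> \<rho> (la_bracket X Y) = \<rho> X * \<rho> Y - \<rho> Y * \<rho> X"
  using assms unfolding lie_rep_def by auto

lemma part1:
  assumes irr: "irreducible_lie_rep sA m n \<rho>"
  shows "irreducible_gen_rep sA m e n (Phi_pi m \<rho>) (Phi_a m \<rho>)"
proof -
  have lr: "lie_rep sA m n \<rho>" using irr unfolding irreducible_lie_rep_def by blast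
  note car = lie_rep_props(1)[OF lr] and radd = lie_rep_props(2)[OF lr]
    and rsc = lie_rep_props(3)[OF lr] and rbr = lie_rep_props(4)[OF lr]
  define R where "R = \<rho> (0, (\<lambda>_. 0), Abar m)"
  define p where "p = Phi_pi m \<rho>"
  have Rc: "R \<in> carrier_mat n n" unfolding R_def by (rule car[OF LAb])
  have pc: "p x \<in> carrier_mat n n" for x unfolding p_def Phi_pi_def by (rule car[OF LU])
  have pa: "Phi_a m \<rho> = - R" unfolding Phi_a_def R_def ..
  have padd: "p (x + y) = p x + p y" for x y
  proof -
    have "la_add (x, (\<lambda>_. 0), (\<lambda>_ _. 0)) (y, (\<lambda>_. 0), (\<lambda>_ _. 0)) = (x + y, (\<lambda>_. 0), (\<lambda>_ _. 0))"
      by (simp add: la_add_def)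
    then show ?thesis using radd[OF LU[of x] LU[of y]] unfolding p_def Phi_pi_def by simp
  qed
  have psc: "p (sA c x) = c \<cdot>\<^sub>m p x" for c x
  proof -
    have "la_scale sA c (x, (\<lambda>_. 0), (\<lambda>_ _. 0)) = (sA c x, (\<lambda>_. 0), (\<lambda>_ _. 0))"
      by (simp add: la_scale_def)
    then show ?thesis using rsc[OF LU[of x], of c] unfolding p_def Phi_pi_def by simp
  qed
  have pL: "\<rho> (0, Lop m x, (\<lambda>_ _. 0)) = br R (p x)" for x
    using rbr[OF LAb LU[of x]] br_L[of x] unfolding R_def p_def Phi_pi_def br_def by simp
  have pm: "p (m x y) = jprod_a (- R) (p x) (p y)" for x y
  proof -
    have "la_bracket (0, Lop m x, (\<lambda>_ _. 0)) (y, (\<lambda>_. 0), (\<lambda>_ _. 0)) = (m x y, (\<lambda>_. 0), (\<lambda>_ _. 0))"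
      by (simp add: la_bracket_def Lop_def fun_eq_iff)
    then have "p (m x y) = br (br R (p x)) (p y)"
      using rbr[OF LL[of x] LU[of y]] pL unfolding p_def Phi_pi_def br_def by simp
    also have "\<dots> = jprod_a (- R) (p x) (p y)"
      using jprod_br[of "p x" n "p y" "- R"] pc Rc br_antisym[of R n "p x"]
      by (simp add: br_uminus_right[of _ n])
    finally show ?thesis .
  qed
  have prel: "mcomm (- R) (mcomm (p e) (- R)) = - R"
  proof -
    define T :: "'a LAel" where "T = (0, (\<lambda>x. sA (-1) (Lop m e x)), (\<lambda>_ _. 0))"
    have TU: "(\<lambda>x. sA (-1) (Lop m e x)) \<in> U0 sA m"
      unfolding U0_def by (rule lspan.lspan_scale[where c="-1", OF lspan.lspan_base]) simp
    have TL: "T \<in> LA sA m" unfolding T_def by (rule mem_LA[OF TU zero_U1])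
    have eT: "la_bracket (e, (\<lambda>_. 0), (\<lambda>_ _. 0)) (0, (\<lambda>_. 0), Abar m) = T"
      unfolding T_def by (simp add: la_bracket_def Lop_def Abar_def scale_m1 fun_eq_iff)
    have eO: "la_bracket (0, (\<lambda>_. 0), Abar m) T = la_scale sA (-1) (0, (\<lambda>_. 0), Abar m)"
      unfolding T_def by (simp add: la_bracket_def la_scale_def Lop_def Abar_def scale_m1 munit mneg mneg2 fun_eq_iff)
    have "\<rho> T = br (p e) R" using rbr[OF LU[of e] LAb] eT unfolding R_def p_def Phi_pi_def br_def by simp
    then have "br R (br (p e) R) = (-1) \<cdot>\<^sub>m R"
      using rbr[OF LAb TL] eO rsc[OF LAb, of "-1"] unfolding R_def br_def by simp
    then show ?thesis unfolding mcomm_def br_def[symmetric] using Rc pc[of e]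
      by (simp add: br_uminus_left[of _ n] br_uminus_right[of _ n] ent_eq_iff[of _ n] fun_eq_iff)
  qed
  have gr: "gen_rep sA m e n p (- R)"
    unfolding gen_rep_def using Rc pc padd psc pm prel by simp
  have np: "n > 0" using irr unfolding irreducible_lie_rep_def irreducible_family_def by blast
  have "\<not> (\<exists>W. subspace_vec n W \<and> W \<noteq> {0\<^sub>v n} \<and> W \<noteq> carrier_vec n \<and>
            (\<forall>M\<in>insert (- R) (range p). \<forall>w\<in>W. M *\<^sub>v w \<in> W))"
  proof
    assume "\<exists>W. subspace_vec n W \<and> W \<noteq> {0\<^sub>v n} \<and> W \<noteq> carrier_vec n \<and>
            (\<forall>M\<in>insert (- R) (range p). \<forall>w\<in>W. M *\<^sub>v w \<in> W)"
    then obtain W where W: "subspace_vec n W" "W \<noteq> {0\<^sub>v n}" "W \<noteq> carrier_vec n"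
      and inv: "\<forall>M\<in>insert (- R) (range p). \<forall>w\<in>W. M *\<^sub>v w \<in> W" by blast
    have Wc: "w \<in> W \<Longrightarrow> w \<in> carrier_vec n" for w using W(1) unfolding subspace_vec_def by blast
    have all: "\<forall>w\<in>W. \<rho> X *\<^sub>v w \<in> W" if X: "X \<in> LA sA m" for X
    proof (rule LA_induct[OF X])
      show "\<forall>w\<in>W. \<rho> (x, (\<lambda>_. 0), (\<lambda>_ _. 0)) *\<^sub>v w \<in> W" for x
        using inv unfolding p_def Phi_pi_def by blast
      show "\<forall>w\<in>W. \<rho> (0, (\<lambda>_. 0), Abar m) *\<^sub>v w \<in> W"
      proof
        fix w assume w: "w \<in> W"
        have "(- R) *\<^sub>v w \<in> W" using inv w by blast
        then have "(-1) \<cdot>\<^sub>v ((- R) *\<^sub>v w) \<in> W" using W(1) unfolding subspace_vec_def by blast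
        moreover have "(-1) \<cdot>\<^sub>v ((- R) *\<^sub>v w) = R *\<^sub>v w"
        proof -
          have "(- R) *\<^sub>v w = - (R *\<^sub>v w)" using Wc[OF w] Rc
            by (intro uminus_mult_mat_vec) (metis carrier_matD(2) carrier_vecD)
          then show ?thesis by (intro eq_vecI) auto
        qed
        ultimately show "\<rho> (0, (\<lambda>_. 0), Abar m) *\<^sub>v w \<in> W" unfolding R_def by simp
      qed
      show "\<forall>w\<in>W. \<rho> (la_add X Y) *\<^sub>v w \<in> W"
        if "X \<in> LA sA m" "Y \<in> LA sA m" "\<forall>w\<in>W. \<rho> X *\<^sub>v w \<in> W" "\<forall>w\<in>W. \<rho> Y *\<^sub>v w \<in> W" for X Y
      proof
        fix w assume w: "w \<in> W"
        have "\<rho> (la_add X Y) *\<^sub>v w = \<rho> X *\<^sub>v w + \<rho> Y *\<^sub>v w"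
          using radd[OF that(1,2)] car[OF that(1)] car[OF that(2)] Wc[OF w]
          by (simp add: add_mult_distrib_mat_vec[of _ n n])
        then show "\<rho> (la_add X Y) *\<^sub>v w \<in> W" using that(3,4) w W(1) unfolding subspace_vec_def by simp
      qed
      show "\<forall>w\<in>W. \<rho> (la_scale sA c X) *\<^sub>v w \<in> W"
        if "X \<in> LA sA m" "\<forall>w\<in>W. \<rho> X *\<^sub>v w \<in> W" for c X
      proof
        fix w assume w: "w \<in> W"
        have "\<rho> (la_scale sA c X) *\<^sub>v w = c \<cdot>\<^sub>v (\<rho> X *\<^sub>v w)"
          using rsc[OF that(1)] car[OF that(1)] Wc[OF w] by (simp add: smult_mat_vec'[of _ n])
        then show "\<rho> (la_scale sA c X) *\<^sub>v w \<in> W" using that(2) w W(1) unfolding subspace_vec_def by simp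
      qed
      show "\<forall>w\<in>W. \<rho> (la_bracket X Y) *\<^sub>v w \<in> W"
        if "X \<in> LA sA m" "Y \<in> LA sA m" "\<forall>w\<in>W. \<rho> X *\<^sub>v w \<in> W" "\<forall>w\<in>W. \<rho> Y *\<^sub>v w \<in> W" for X Y
      proof
        fix w assume w: "w \<in> W"
        note Xc = car[OF that(1)] and Yc = car[OF that(2)]
        have "\<rho> (la_bracket X Y) *\<^sub>v w = \<rho> X *\<^sub>v (\<rho> Y *\<^sub>v w) - \<rho> Y *\<^sub>v (\<rho> X *\<^sub>v w)"
          using rbr[OF that(1,2)] Xc Yc Wc[OF w]
          by (simp add: minus_mult_distrib_mat_vec[of _ n n] assoc_mult_mat_vec[of _ n n])
        moreover have "\<rho> X *\<^sub>v (\<rho> Y *\<^sub>v w) \<in> W" "\<rho> Y *\<^sub>v (\<rho> X *\<^sub>v w) \<in> W"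
          using that(3,4) w by blast+
        ultimately show "\<rho> (la_bracket X Y) *\<^sub>v w \<in> W" using sub_minus[OF W(1)] by simp
      qed
    qed
    have "\<exists>W. subspace_vec n W \<and> W \<noteq> {0\<^sub>v n} \<and> W \<noteq> carrier_vec n \<and> (\<forall>M\<in>\<rho> ` LA sA m. \<forall>w\<in>W. M *\<^sub>v w \<in> W)"
      using W all by (intro exI[of _ W]) blast
    moreover have "\<not> (\<exists>W. subspace_vec n W \<and> W \<noteq> {0\<^sub>v n} \<and> W \<noteq> carrier_vec n \<and> (\<forall>M\<in>\<rho> ` LA sA m. \<forall>w\<in>W. M *\<^sub>v w \<in> W))"
      using irr unfolding irreducible_lie_rep_def irreducible_family_def by blast
    ultimately show False by (rule notE[rotated])
  qed
  then have "irreducible_family n (insert (- R) (range p))"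
    unfolding irreducible_family_def using np by blast
  then show ?thesis unfolding irreducible_gen_rep_def p_def[symmetric] pa using gr by blast
qed

end

context jalg begin

lemma part2:
  assumes r1: "irreducible_lie_rep sA m n \<rho>" and r2: "irreducible_lie_rep sA m n' \<rho>'"
  shows "lie_rep_equiv sA m n \<rho> n' \<rho>' \<longleftrightarrow>
         gen_rep_equiv n (Phi_pi m \<rho>) (Phi_a m \<rho>) n' (Phi_pi m \<rho>') (Phi_a m \<rho>')"
proof
  have lr: "lie_rep sA m n \<rho>" using r1 unfolding irreducible_lie_rep_def by blast
  note car = lie_rep_props(1)[OF lr]
  assume "lie_rep_equiv sA m n \<rho> n' \<rho>'"
  then obtain P where nn: "n = n'" and P: "P \<in> carrier_mat n n" "invertible_mat P"
    and PX: "\<And>X. X \<in> LA sA m \<Longrightarrow> P * \<rho> X = \<rho>' X * P"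
    unfolding lie_rep_equiv_def by blast
  have "P * Phi_pi m \<rho> x = Phi_pi m \<rho>' x * P" for x unfolding Phi_pi_def by (rule PX[OF LU])
  moreover have "P * Phi_a m \<rho> = Phi_a m \<rho>' * P"
  proof -
    have lr': "lie_rep sA m n' \<rho>'" using r2 unfolding irreducible_lie_rep_def by blast
    note car' = lie_rep_props(1)[OF lr', unfolded nn[symmetric]]
    have "P * - \<rho> (0, (\<lambda>_. 0), Abar m) = - (P * \<rho> (0, (\<lambda>_. 0), Abar m))"
      by (rule uminus_mult_right_mat) (use P(1) car[OF LAb] in auto)
    also have "\<dots> = - (\<rho>' (0, (\<lambda>_. 0), Abar m) * P)" using PX[OF LAb] by simp
    also have "\<dots> = - \<rho>' (0, (\<lambda>_. 0), Abar m) * P"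
      by (rule uminus_mult_left_mat[symmetric]) (use P(1) car'[OF LAb] in auto)
    finally show ?thesis unfolding Phi_a_def .
  qed
  ultimately show "gen_rep_equiv n (Phi_pi m \<rho>) (Phi_a m \<rho>) n' (Phi_pi m \<rho>') (Phi_a m \<rho>')"
    unfolding gen_rep_equiv_def using nn P by blast
next
  have lr: "lie_rep sA m n \<rho>" using r1 unfolding irreducible_lie_rep_def by blast
  have lr': "lie_rep sA m n' \<rho>'" using r2 unfolding irreducible_lie_rep_def by blast
  assume "gen_rep_equiv n (Phi_pi m \<rho>) (Phi_a m \<rho>) n' (Phi_pi m \<rho>') (Phi_a m \<rho>')"
  then obtain P where nn: "n = n'" and P: "P \<in> carrier_mat n n" "invertible_mat P"
    and Pp: "\<And>x. P * Phi_pi m \<rho> x = Phi_pi m \<rho>' x * P" and Pa: "P * Phi_a m \<rho> = Phi_a m \<rho>' * P"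
    unfolding gen_rep_equiv_def by blast
  note car = lie_rep_props(1)[OF lr] and radd = lie_rep_props(2)[OF lr]
    and rsc = lie_rep_props(3)[OF lr] and rbr = lie_rep_props(4)[OF lr]
  note car' = lie_rep_props(1)[OF lr', unfolded nn[symmetric]] and radd' = lie_rep_props(2)[OF lr']
    and rsc' = lie_rep_props(3)[OF lr'] and rbr' = lie_rep_props(4)[OF lr']
  have all: "P * \<rho> X = \<rho>' X * P" if X: "X \<in> LA sA m" for X
  proof (rule LA_induct[OF X])
    show "P * \<rho> (x, (\<lambda>_. 0), (\<lambda>_ _. 0)) = \<rho>' (x, (\<lambda>_. 0), (\<lambda>_ _. 0)) * P" for x
      using Pp[of x] unfolding Phi_pi_def .
    show "P * \<rho> (0, (\<lambda>_. 0), Abar m) = \<rho>' (0, (\<lambda>_. 0), Abar m) * P"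
    proof -
      have "P * - \<rho> (0, (\<lambda>_. 0), Abar m) = - (P * \<rho> (0, (\<lambda>_. 0), Abar m))"
        by (rule uminus_mult_right_mat) (use P(1) car[OF LAb] in auto)
      moreover have "- \<rho>' (0, (\<lambda>_. 0), Abar m) * P = - (\<rho>' (0, (\<lambda>_. 0), Abar m) * P)"
        by (rule uminus_mult_left_mat) (use P(1) car'[OF LAb] in auto)
      ultimately show ?thesis using Pa unfolding Phi_a_def by simp
    qed
    show "P * \<rho> (la_add X Y) = \<rho>' (la_add X Y) * P"
      if "X \<in> LA sA m" "Y \<in> LA sA m" "P * \<rho> X = \<rho>' X * P" "P * \<rho> Y = \<rho>' Y * P" for X Y
      using that radd[OF that(1,2)] radd'[OF that(1,2)] car[OF that(1)] car[OF that(2)]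
        car'[OF that(1)] car'[OF that(2)] P(1)
      by (simp add: md4[of _ n] md3[of _ n])
    show "P * \<rho> (la_scale sA c X) = \<rho>' (la_scale sA c X) * P"
      if "X \<in> LA sA m" "P * \<rho> X = \<rho>' X * P" for c X
      using that rsc[OF that(1)] rsc'[OF that(1)] car[OF that(1)] car'[OF that(1)] P(1)
      by (simp add: md5[of _ n] md6[of _ n])
    show "P * \<rho> (la_bracket X Y) = \<rho>' (la_bracket X Y) * P"
      if "X \<in> LA sA m" "Y \<in> LA sA m" "P * \<rho> X = \<rho>' X * P" "P * \<rho> Y = \<rho>' Y * P" for X Y
    proof -
      note c = car[OF that(1)] car[OF that(2)] car'[OF that(1)] car'[OF that(2)] P(1)
      have "P * \<rho> (la_bracket X Y) = P * \<rho> X * \<rho> Y - P * \<rho> Y * \<rho> X"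
        using rbr[OF that(1,2)] c by (simp add: md2[of _ n] md7[of _ n])
      also have "\<dots> = \<rho>' X * (P * \<rho> Y) - \<rho>' Y * (P * \<rho> X)"
        using that(3,4) c by (simp add: md7[of _ n])
      also have "\<dots> = (\<rho>' X * \<rho>' Y - \<rho>' Y * \<rho>' X) * P"
        using that(3,4) c by (simp add: md1[of _ n] md7[of _ n])
      also have "\<dots> = \<rho>' (la_bracket X Y) * P" using rbr'[OF that(1,2)] by simp
      finally show ?thesis .
    qed
  qed
  show "lie_rep_equiv sA m n \<rho> n' \<rho>'"
    unfolding lie_rep_equiv_def using nn P all by blast
qed

end

theorem theorem3:
  fixes sA :: "'k::field_char_0 \<Rightarrow> 'a::ab_group_add \<Rightarrow> 'a"
    and m :: "'a \<Rightarrow> 'a \<Rightarrow> 'a" and e :: 'a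
  assumes "jordan_algebra_with_unit sA m e"
  shows "(\<forall>n \<rho>. irreducible_lie_rep sA m n \<rho> \<longrightarrow>
            irreducible_gen_rep sA m e n (Phi_pi m \<rho>) (Phi_a m \<rho>))
       \<and> (\<forall>n \<rho> n' \<rho>'. irreducible_lie_rep sA m n \<rho> \<and> irreducible_lie_rep sA m n' \<rho>' \<longrightarrow>
            (lie_rep_equiv sA m n \<rho> n' \<rho>' \<longleftrightarrow>
             gen_rep_equiv n (Phi_pi m \<rho>) (Phi_a m \<rho>) n' (Phi_pi m \<rho>') (Phi_a m \<rho>')))
       \<and> (\<forall>n \<pi> a. irreducible_gen_rep sA m e n \<pi> a \<longrightarrow>
            (\<exists>\<rho>. irreducible_lie_rep sA m n \<rho> \<and>
                 gen_rep_equiv n (Phi_pi m \<rho>) (Phi_a m \<rho>) n \<pi> a))"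
proof -
  interpret jalg sA m e by unfold_locales (rule assms)
  have p3: "\<exists>\<rho>. irreducible_lie_rep sA m n \<rho> \<and> gen_rep_equiv n (Phi_pi m \<rho>) (Phi_a m \<rho>) n \<pi> a"
    if "irreducible_gen_rep sA m e n \<pi> a" for n \<pi> a
  proof -
    interpret grep_ctx sA m e n \<pi> a
      by unfold_locales (use assms that in \<open>auto simp: irreducible_gen_rep_def\<close>)
    show ?thesis by (rule part3_local)
  qed
  show ?thesis using part1 part2 p3 by blast
qed


end
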